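(* Let $N\ge2$, $a\in\mathbb{R}$, $\alpha\in(0,1]$, $\sigma_r^2,\sigma_w^2\ge0$. Let $P$ be a symmetric, doubly stochastic, positive semi-definite $N\times N$ matrix with nonnegative entries and eigenvalues $-1<\lambda_N(P)\le\dots\le\lambda_2(P)<\lambda_1(P)=1$, with orthonormal eigenvectors $v_1=\mathbf 1_N/\sqrt N,v_2,\dots,v_N$, and suppose $|a|<1/|\alpha|$ and that $a(P-\alpha I_N)$ has spectral radius less than $1$. Let $\mathcal E=\{\{i,j\}: i\ne j,\ p_{ij}>0\}$ and assume some pair $\{i,j\}$, $i\neq j$, is not in $\mathcal E$. For such a pair and $\epsilon>0$, let $\Delta P(i,j)=-(\mathbf e_i-\mathbf e_j)(\mathbf e_i-\mathbf e_j)^{\mathsf T}$, $P_\epsilon=P+\epsilon\Delta P(i,j)$, $z_k(i,j)=\epsilon\, v_k^{\mathsf T}\Delta P(i,j)v_k$, and $$h_k(i,j)=\frac{z_k(i,j)\big(2(1-\alpha^2a^2)\lambda_k(P)+2a^2\alpha\lambda_k^2(P)\big)}{\big(1-a^2(\lambda_k(P)-\alpha)^2\big)^2}.$$ With $\tilde{\mathrm{MSD}}(M,\alpha)=\frac{\sigma_r^2}{1-a^2(1-\alpha)^2}+\frac1N\sum_{k=1}^N\frac{a^2\alpha^2\sigma_w^2\lambda_k^2(M)}{1-a^2(\lambda_k(M)-\alpha)^2}$, the following hold. (i) For each pair $\{i,j\}\notin\mathcal E$, as $\epsilon\to0$, $$\tilde{\mathrm{MSD}}(P_\epsilon,\alpha)-\tilde{\mathrm{MSD}}(P,\alpha)=\frac{a^2\alpha^2\sigma_w^2}{N}\sum_{k=1}^Nh_k(i,j)+\mathcal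 O(\epsilon^2),$$ so that, for $\epsilon\ll1$, the edge whose addition with weight $\epsilon$ most reduces $\tilde{\mathrm{MSD}}$ is found by solving $\min_{\{i,j\}\notin\mathcal E}\sum_{k=1}^Nh_k(i,j)$. (ii) Letting $\zeta_{\max}=\max_{k>1}|\lambda_k(P)-\alpha|$, $$\min_{\{i,j\}\notin\mathcal E}\sum_{k=1}^Nh_k(i,j)\ \ge\ \min_{\{i,j\}\notin\mathcal E}\frac{-2\epsilon\Big((1-\alpha^2a^2)(p_{ii}+p_{jj})+a^2\alpha\big([P^2]_{ii}+[P^2]_{jj}-2[P^2]_{ij}\big)\Big)}{\big(1-a^2\zeta_{\max}^2\big)^2}.$$
   Context: $\tilde{\mathrm{MSD}}(M,\alpha)$ is the steady-state mean square deviation per agent of the estimator $\tilde{x}_{i,t+1}=a(\sum_jm_{ij}\tilde{x}_{j,t}+\alpha(\sum_jm_{ij}y_{j,t}-\tilde{x}_{i,t}))$ for the model $x_{t+1}=ax_t+r_t$, $y_{i,t}=x_t+w_{i,t}$. $P_\epsilon$ corresponds to adding the edge $\{i,j\}$ with weight $\epsilon$ and subtracting $\epsilon$ from the self-reliances $p_{ii},p_{jj}$. $\mathbf e_i$ is the $i$-th standard basis vector; $[P^2]_{ij}$ is the $(i,j)$ entry of $P^2$. *)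

theory Defs
  imports "Jordan_Normal_Form.Spectral_Radius" "HOL-Library.Landau_Symbols"
begin

text \<open>For a real symmetric matrix these
  are exactly its N real eigenvalues counted with multiplicity.\<close>
definition eigs :: "real mat \<Rightarrow> real multiset" where
  "eigs M = proots (char_poly M)"

definition msd_tilde ::
  "nat \<Rightarrow> real \<Rightarrow> real \<Rightarrow> real \<Rightarrow> real mat \<Rightarrow> real \<Rightarrow> real" where
  "msd_tilde N a sr sw M \<alpha> =
     sr\<^sup>2 / (1 - a\<^sup>2 * (1 - \<alpha>)\<^sup>2)
     + 1 / real N * sum_mset (image_mset
         (\<lambda>l. a\<^sup>2 * \<alpha>\<^sup>2 * sw\<^sup>2 * l\<^sup>2 / (1 - a\<^sup>2 * (l - \<alpha>)\<^sup>2)) (eigs M))"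

definition deltaP :: "nat \<Rightarrow> nat \<Rightarrow> nat \<Rightarrow> real mat" where
  "deltaP N i j = mat N N (\<lambda>(r, c).
      - ((if r = i then 1 else 0) - (if r = j then 1 else 0))
        * ((if c = i then 1 else 0) - (if c = j then 1 else 0)))"

definition zk :: "nat \<Rightarrow> real \<Rightarrow> real vec \<Rightarrow> nat \<Rightarrow> nat \<Rightarrow> real" where
  "zk N \<epsilon> vk i j = \<epsilon> * (vk \<bullet> (deltaP N i j *\<^sub>v vk))"

definition hk ::
  "nat \<Rightarrow> real \<Rightarrow> real \<Rightarrow> real \<Rightarrow> real \<Rightarrow> real vec \<Rightarrow> nat \<Rightarrow> nat \<Rightarrow> real" where
  "hk N a \<alpha> \<epsilon> lk vk i j =
     zk N \<epsilon> vk i j * (2 * (1 - \<alpha>\<^sup>2 * a\<^sup>2) * lk + 2 * a\<^sup>2 * \<alpha> * lk\<^sup>2)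
     / (1 - a\<^sup>2 * (lk - \<alpha>)\<^sup>2)\<^sup>2"

end

theory Submission
  imports Defs
begin


lemma logderiv_prod:
  fixes L :: "real list"
  assumes "poly (\<Prod>r\<leftarrow>L. [:-r,1:]) \<beta> \<noteq> 0"
  shows "poly (pderiv (\<Prod>r\<leftarrow>L. [:-r,1:])) \<beta> = poly (\<Prod>r\<leftarrow>L. [:-r,1:]) \<beta> * (\<Sum>r\<leftarrow>L. 1/(\<beta> - r))"
  using assms
proof (induction L)
  case Nil
  then show ?case by simp
next
  case (Cons r L)
  let ?q = "\<Prod>r\<leftarrow>L. [:-r,1:]"
  have ne: "\<beta> - r \<noteq> 0" and q: "poly ?q \<beta> \<noteq> 0" using Cons.prems by auto
  have IH: "poly (pderiv ?q) \<beta> = poly ?q \<beta> * (\<Sum>r\<leftarrow>L. 1/(\<beta> - r))" using Cons q by auto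
  have "poly (pderiv (\<Prod>r\<leftarrow>r#L. [:-r,1:])) \<beta> = poly ?q \<beta> + (\<beta> - r) * poly (pderiv ?q) \<beta>"
    by (subst list.map(2), subst prod_list.Cons, subst pderiv_mult, simp add: pderiv_pCons algebra_simps)
  also have "\<dots> = (\<beta> - r) * poly ?q \<beta> * (1/(\<beta> - r) + (\<Sum>r\<leftarrow>L. 1/(\<beta> - r)))"
    using ne by (simp add: IH field_simps)
  finally have calc: "poly (pderiv (\<Prod>r\<leftarrow>r#L. [:-r,1:])) \<beta> = (\<beta> - r) * poly ?q \<beta> * (1/(\<beta> - r) + (\<Sum>r\<leftarrow>L. 1/(\<beta> - r)))" .
  have e: "poly (\<Prod>r\<leftarrow>r#L. [:-r,1:]) \<beta> = (\<beta> - r) * poly ?q \<beta>" by (simp add: algebra_simps)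
  show ?case unfolding e calc by simp
qed

lemma sym_real_eig:
  fixes M :: "real mat"
  assumes M: "M \<in> carrier_mat n n" and sym: "M\<^sup>T = M"
    and root: "poly (char_poly (map_mat complex_of_real M)) z = 0"
  shows "Im z = 0"
proof -
  let ?M = "map_mat complex_of_real M"
  have M': "?M \<in> carrier_mat n n" using M by auto
  have "eigenvalue ?M z" using eigenvalue_root_char_poly[OF M'] root by auto
  then obtain x where x: "x \<in> carrier_vec n" "x \<noteq> 0\<^sub>v n" "?M *\<^sub>v x = z \<cdot>\<^sub>v x"
    unfolding eigenvalue_def eigenvector_def using M by auto
  have symM: "M $$ (i,j) = M $$ (j,i)" if "i < n" "j < n" for i j
    using sym M that by (metis carrier_matD index_transpose_mat(1))
  define s where "s = (\<Sum>i<n. cnj (x$i) * (\<Sum>j<n. of_real (M$$(i,j)) * x$j))"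
  have Mx: "(?M *\<^sub>v x) $ i = (\<Sum>j<n. of_real (M$$(i,j)) * x$j)" if "i < n" for i
    using that M x(1) by (auto simp: mult_mat_vec_def scalar_prod_def lessThan_atLeast0 intro!: sum.cong)
  have s1: "s = z * (\<Sum>i<n. cnj (x$i) * x$i)"
  proof -
    have "s = (\<Sum>i<n. cnj (x$i) * (z * x$i))"
      unfolding s_def
      apply (rule sum.cong[OF refl])
      using Mx x(1,3) by (metis index_smult_vec(1) carrier_vecD lessThan_iff)
    thus ?thesis by (simp add: sum_distrib_left algebra_simps)
  qed
  have "cnj s = (\<Sum>i<n. \<Sum>j<n. x$i * of_real (M$$(i,j)) * cnj (x$j))"
    unfolding s_def by (simp add: sum_distrib_left algebra_simps)
  also have "\<dots> = (\<Sum>j<n. \<Sum>i<n. x$i * of_real (M$$(i,j)) * cnj (x$j))"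
    by (rule sum.swap)
  also have "\<dots> = (\<Sum>j<n. \<Sum>i<n. cnj (x$j) * (of_real (M$$(j,i)) * x$i))"
    by (intro sum.cong refl, simp add: symM mult.commute mult.left_commute)
  also have "\<dots> = s" unfolding s_def by (simp add: sum_distrib_left)
  finally have "cnj s = s" .
  hence ims: "Im s = 0" by (metis Reals_cnj_iff complex_is_Real_iff)
  define r where "r = (\<Sum>i<n. (Re (x$i))\<^sup>2 + (Im (x$i))\<^sup>2)"
  have "(\<Sum>i<n. cnj (x$i) * x$i) = of_real r"
    unfolding r_def by (simp add: complex_mult_cnj mult.commute)
  have rpos: "r > 0"
  proof -
    obtain i where i: "i < n" "x$i \<noteq> 0" using x(1,2)
      by (metis carrier_vecD eq_vecI index_zero_vec(1) index_zero_vec(2))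
    have "(Re (x$i))\<^sup>2 + (Im (x$i))\<^sup>2 > 0" using i(2)
      by (metis add_nonneg_nonneg complex_eq_0 zero_le_power2 order_le_less)
    moreover have "(Re (x$i))\<^sup>2 + (Im (x$i))\<^sup>2 \<le> r" unfolding r_def
      by (rule member_le_sum, insert i, auto)
    ultimately show ?thesis by simp
  qed
  have "Im s = Im z * r" using s1 \<open>(\<Sum>i<n. cnj (x$i) * x$i) = of_real r\<close> by simp
  with ims rpos show ?thesis by simp
qed


lemma map_poly_of_real_prod:
  "map_poly (of_real :: real \<Rightarrow> complex) (\<Prod>r\<leftarrow>L. [:-r,1:]) = (\<Prod>r\<leftarrow>L. [:-of_real r,1:])"
proof -
  interpret h: map_poly_comm_ring_hom "of_real :: real \<Rightarrow> complex" ..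
  show ?thesis
  proof (induction L)
    case (Cons a L)
    show ?case by (simp only: list.map prod_list.Cons h.hom_mult Cons) simp
  qed simp
qed

lemma map_poly_of_real_inj:
  fixes p q :: "real poly"
  assumes "map_poly (of_real :: real \<Rightarrow> complex) p = map_poly of_real q"
  shows "p = q"
proof (rule poly_eqI)
  fix n
  have "coeff (map_poly (of_real :: real \<Rightarrow> complex) p) n = coeff (map_poly of_real q) n" using assms by simp
  thus "coeff p n = coeff q n" by (simp add: of_real_hom.coeff_map_poly_hom)
qed

lemma sym_split:
  fixes M :: "real mat"
  assumes M: "M \<in> carrier_mat n n" and sym: "M\<^sup>T = M"
  shows "\<exists>L. char_poly M = (\<Prod>r\<leftarrow>L. [:-r,1:]) \<and> length L = n"
proof -
  let ?M = "map_mat complex_of_real M"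
  have M': "?M \<in> carrier_mat n n" using M by auto
  obtain as where as: "char_poly ?M = (\<Prod>a\<leftarrow>as. [:-a,1:])" "length as = n"
    using char_poly_factorized[OF M'] by blast
  have re: "a = of_real (Re a)" if "a \<in> set as" for a
  proof -
    have "poly (char_poly ?M) a = 0" unfolding as(1) using that
      by (simp add: poly_prod_list prod_list_zero_iff)
    hence "Im a = 0" using sym_real_eig[OF M sym] by blast
    thus ?thesis by (simp add: complex_eq_iff)
  qed
  define L where "L = map Re as"
  have "(\<Prod>a\<leftarrow>as. [:-a,1:]) = (\<Prod>r\<leftarrow>L. [:-of_real r,1:])"
    unfolding L_def using re
    by (induction as) auto
  hence "map_poly of_real (char_poly M) = map_poly (of_real :: real \<Rightarrow> complex) (\<Prod>r\<leftarrow>L. [:-r,1:])"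
    using as(1) of_real_hom.char_poly_hom[OF M] map_poly_of_real_prod by metis
  hence "char_poly M = (\<Prod>r\<leftarrow>L. [:-r,1:])" by (rule map_poly_of_real_inj)
  moreover have "length L = n" using as(2) L_def by simp
  ultimately show ?thesis by blast
qed



lemma proots_prod_lin: "proots (\<Prod>r\<leftarrow>L. [:-r,1:]) = mset (L::real list)"
proof (induction L)
  case (Cons a L)
  have nz: "(\<Prod>r\<leftarrow>L. [:-r,1:]) \<noteq> (0::real poly)" by (auto simp: prod_list_zero_iff)
  have "proots ([:-a,1:] * (\<Prod>r\<leftarrow>L. [:-r,1:])) = proots [:-a,1:] + proots (\<Prod>r\<leftarrow>L. [:-r,1:])"
    by (rule proots_mult, simp, rule nz)
  thus ?case using Cons by simp
qed simp


lemma trace_inv: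
  fixes M X :: "real mat"
  assumes M: "M \<in> carrier_mat n n" and X: "X \<in> carrier_mat n n"
    and BX: "(\<beta> \<cdot>\<^sub>m 1\<^sub>m n - M) * X = 1\<^sub>m n"
  shows "poly (char_poly M) \<beta> \<noteq> 0"
    "poly (pderiv (char_poly M)) \<beta> = poly (char_poly M) \<beta> * (\<Sum>i<n. X $$ (i,i))"
proof -
  define B where "B = \<beta> \<cdot>\<^sub>m 1\<^sub>m n - M"
  have Bc: "B \<in> carrier_mat n n" unfolding B_def using M by auto
  have cpB: "poly (char_poly M) \<beta> = det B"
  proof -
    have "- (char_matrix M \<beta>) = B" unfolding B_def char_matrix_def
      by (rule eq_matI, insert M, auto)
    thus ?thesis using char_poly_matrix[OF M] by simp
  qed
  have "det B * det X = 1" using det_mult[OF Bc X] BX unfolding B_def by simp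
  hence dB: "det B \<noteq> 0" by auto
  thus "poly (char_poly M) \<beta> \<noteq> 0" using cpB by simp
  have del: "- (char_matrix (mat_delete M i i) \<beta>) = mat_delete B i i" if i: "i < n" for i
    unfolding B_def char_matrix_def mat_delete_def
    by (rule eq_matI, insert M i, auto)
  have "poly (pderiv (char_poly M)) \<beta> = (\<Sum>i<n. poly (char_poly (mat_delete M i i)) \<beta>)"
    unfolding pderiv_char_poly[OF M] by (simp add: poly_sum)
  also have "\<dots> = (\<Sum>i<n. det (mat_delete B i i))"
  proof (rule sum.cong[OF refl])
    fix i assume "i \<in> {..<n}"
    hence i: "i < n" by simp
    have "mat_delete M i i \<in> carrier_mat (n-1) (n-1)" using mat_delete_carrier[OF M] .
    from char_poly_matrix[OF this] del[OF i]
    show "poly (char_poly (mat_delete M i i)) \<beta> = det (mat_delete B i i)" by simp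
  qed
  also have "\<dots> = (\<Sum>i<n. cofactor B i i)" unfolding cofactor_def
    by (simp add: power_add[symmetric] mult_2[symmetric])
  also have "\<dots> = (\<Sum>i<n. det B * X $$ (i,i))"
  proof (rule sum.cong[OF refl])
    fix i assume "i \<in> {..<n}"
    hence i: "i < n" by simp
    have A: "adj_mat B \<in> carrier_mat n n" "adj_mat B * B = det B \<cdot>\<^sub>m 1\<^sub>m n" using adj_mat[OF Bc] by auto
    have "adj_mat B = adj_mat B * (B * X)" using BX A(1) unfolding B_def by simp
    also have "\<dots> = (adj_mat B * B) * X" using A(1) Bc X by (simp add: assoc_mult_mat)
    also have "\<dots> = det B \<cdot>\<^sub>m X" using A(2) X by (simp add: mult_smult_assoc_mat[of _ n n _ n])
    finally have "adj_mat B $$ (i,i) = det B * X $$ (i,i)" using i X by simp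
    moreover have "adj_mat B $$ (i,i) = cofactor B i i" unfolding adj_mat_def using i Bc by simp
    ultimately show "cofactor B i i = det B * X $$ (i,i)" by simp
  qed
  also have "\<dots> = poly (char_poly M) \<beta> * (\<Sum>i<n. X $$ (i,i))" unfolding cpB by (simp add: sum_distrib_left)
  finally show "poly (pderiv (char_poly M)) \<beta> = poly (char_poly M) \<beta> * (\<Sum>i<n. X $$ (i,i))" .
qed


lemma mat_mult_entry:
  assumes "A \<in> carrier_mat n n" "B \<in> carrier_mat n n" "r < n" "c < n"
  shows "(A * B) $$ (r,c) = (\<Sum>s<n. A $$ (r,s) * B $$ (s,c))"
  using assms by (simp add: scalar_prod_def lessThan_atLeast0)

lemma mat_vec_entry:
  assumes "A \<in> carrier_mat n n" "x \<in> carrier_vec n" "r < n"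
  shows "(A *\<^sub>v x) $ r = (\<Sum>s<n. A $$ (r,s) * x $ s)"
  using assms by (simp add: scalar_prod_def lessThan_atLeast0)

lemma sum_u:
  fixes f :: "nat \<Rightarrow> real"
  assumes "i < n" "j < n" "i \<noteq> j"
  shows "(\<Sum>s<n. ((if s = i then 1 else 0) - (if s = j then 1 else 0)) * f s) = f i - f j"
proof -
  have e: "(\<Sum>s<n. (if s = k then 1 else 0) * f s) = f k" if "k < n" for k
  proof -
    have "(\<Sum>s<n. (if s = k then 1 else 0) * f s) = (\<Sum>s<n. if s = k then f s else 0)"
      by (rule sum.cong, auto)
    also have "\<dots> = f k" using that by (simp add: sum.delta)
    finally show ?thesis .
  qed
  have "(\<Sum>s<n. ((if s = i then 1 else 0) - (if s = j then 1 else 0)) * f s)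
     = (\<Sum>s<n. (if s = i then 1 else 0) * f s) - (\<Sum>s<n. (if s = j then 1 else 0) * f s)"
    by (simp only: left_diff_distrib sum_subtractf)
  thus ?thesis using e assms by simp
qed

locale spec =
  fixes N :: nat and P :: "real mat" and lam :: "nat \<Rightarrow> real" and v :: "nat \<Rightarrow> real vec"
  assumes P_carrier: "P \<in> carrier_mat N N"
    and v_carrier: "\<And>k. k < N \<Longrightarrow> v k \<in> carrier_vec N"
    and v_eig: "\<And>k. k < N \<Longrightarrow> P *\<^sub>v v k = lam k \<cdot>\<^sub>v v k"
    and v_orth: "\<And>k l. k < N \<Longrightarrow> l < N \<Longrightarrow> v k \<bullet> v l = (if k = l then 1 else 0)"
begin

lemma dot: "k < N \<Longrightarrow> l < N \<Longrightarrow> (\<Sum>r<N. v k $ r * v l $ r) = (if k = l then 1 else 0)"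
  using v_orth[of k l] v_carrier[of l] by (simp add: scalar_prod_def lessThan_atLeast0)

lemma Pv: "k < N \<Longrightarrow> r < N \<Longrightarrow> (\<Sum>t<N. P $$ (r,t) * v k $ t) = lam k * v k $ r"
proof -
  assume k: "k < N" and r: "r < N"
  have "(P *\<^sub>v v k) $ r = (lam k \<cdot>\<^sub>v v k) $ r" using v_eig[OF k] by simp
  thus ?thesis using mat_vec_entry[OF P_carrier v_carrier[OF k] r] r v_carrier[OF k] by simp
qed

definition V where "V = mat N N (\<lambda>(r,k). v k $ r)"

lemma compl: "r < N \<Longrightarrow> s < N \<Longrightarrow> (\<Sum>k<N. v k $ r * v k $ s) = (if r = s then 1 else 0)"
proof -
  assume r: "r < N" and s: "s < N"
  have Vc: "V \<in> carrier_mat N N" "V\<^sup>T \<in> carrier_mat N N" unfolding V_def by auto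
  have "V\<^sup>T * V = 1\<^sub>m N"
  proof (rule eq_matI)
    fix k l assume "k < dim_row (1\<^sub>m N)" "l < dim_col (1\<^sub>m N)"
    hence k: "k < N" and l: "l < N" by auto
    have "(V\<^sup>T * V) $$ (k,l) = (\<Sum>r<N. v k $ r * v l $ r)"
      using mat_mult_entry[OF Vc(2) Vc(1) k l] k l unfolding V_def by simp
    thus "(V\<^sup>T * V) $$ (k,l) = 1\<^sub>m N $$ (k,l)" using dot[OF k l] k l by simp
  qed (insert Vc, auto)
  hence "V * V\<^sup>T = 1\<^sub>m N" using mat_mult_left_right_inverse[OF Vc(2) Vc(1)] by simp
  hence "(V * V\<^sup>T) $$ (r,s) = (if r = s then 1 else 0)" using r s by simp
  moreover have "(V * V\<^sup>T) $$ (r,s) = (\<Sum>k<N. v k $ r * v k $ s)"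
    using mat_mult_entry[OF Vc(1) Vc(2) r s] r s unfolding V_def by simp
  ultimately show ?thesis by simp
qed

lemma Pspec: "r < N \<Longrightarrow> s < N \<Longrightarrow> P $$ (r,s) = (\<Sum>k<N. lam k * v k $ r * v k $ s)"
proof -
  assume r: "r < N" and s: "s < N"
  have "P $$ (r,s) = (\<Sum>t<N. P $$ (r,t) * (if t = s then 1 else 0))"
    using s by (simp add: if_distrib sum.delta cong: if_cong)
  also have "\<dots> = (\<Sum>t<N. P $$ (r,t) * (\<Sum>k<N. v k $ t * v k $ s))"
    by (rule sum.cong[OF refl], simp add: compl s)
  also have "\<dots> = (\<Sum>t<N. \<Sum>k<N. P $$ (r,t) * v k $ t * v k $ s)"
    by (simp add: sum_distrib_left mult.assoc)
  also have "\<dots> = (\<Sum>k<N. \<Sum>t<N. P $$ (r,t) * v k $ t * v k $ s)"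
    by (rule sum.swap)
  also have "\<dots> = (\<Sum>k<N. (\<Sum>t<N. P $$ (r,t) * v k $ t) * v k $ s)"
    by (simp add: sum_distrib_right)
  also have "\<dots> = (\<Sum>k<N. lam k * v k $ r * v k $ s)"
    by (rule sum.cong[OF refl], simp add: Pv r)
  finally show ?thesis .
qed

lemma P2spec: "r < N \<Longrightarrow> s < N \<Longrightarrow> (P * P) $$ (r,s) = (\<Sum>k<N. (lam k)\<^sup>2 * v k $ r * v k $ s)"
proof -
  assume r: "r < N" and s: "s < N"
  have "(P * P) $$ (r,s) = (\<Sum>t<N. P $$ (r,t) * P $$ (t,s))"
    by (rule mat_mult_entry[OF P_carrier P_carrier r s])
  also have "\<dots> = (\<Sum>t<N. P $$ (r,t) * (\<Sum>k<N. lam k * v k $ t * v k $ s))"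
    by (rule sum.cong[OF refl], simp add: Pspec s)
  also have "\<dots> = (\<Sum>t<N. \<Sum>k<N. lam k * (P $$ (r,t) * v k $ t) * v k $ s)"
    by (simp add: sum_distrib_left mult_ac)
  also have "\<dots> = (\<Sum>k<N. \<Sum>t<N. lam k * (P $$ (r,t) * v k $ t) * v k $ s)"
    by (rule sum.swap)
  also have "\<dots> = (\<Sum>k<N. lam k * (\<Sum>t<N. P $$ (r,t) * v k $ t) * v k $ s)"
    by (simp add: sum_distrib_left sum_distrib_right)
  also have "\<dots> = (\<Sum>k<N. (lam k)\<^sup>2 * v k $ r * v k $ s)"
    by (rule sum.cong[OF refl], simp add: Pv r power2_eq_square)
  finally show ?thesis .
qed

lemma orthsum: "(\<Sum>r<N. (\<Sum>k<N. a k * v k $ r) * (\<Sum>l<N. b l * v l $ r)) = (\<Sum>k<N. a k * b k)"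
proof -
  have "(\<Sum>r<N. (\<Sum>k<N. a k * v k $ r) * (\<Sum>l<N. b l * v l $ r))
      = (\<Sum>r<N. \<Sum>k<N. \<Sum>l<N. a k * b l * (v k $ r * v l $ r))"
    by (simp add: sum_product mult_ac)
  also have "\<dots> = (\<Sum>k<N. \<Sum>r<N. \<Sum>l<N. a k * b l * (v k $ r * v l $ r))"
    by (rule sum.swap)
  also have "\<dots> = (\<Sum>k<N. \<Sum>l<N. \<Sum>r<N. a k * b l * (v k $ r * v l $ r))"
    by (rule sum.cong[OF refl], rule sum.swap)
  also have "\<dots> = (\<Sum>k<N. \<Sum>l<N. a k * b l * (\<Sum>r<N. v k $ r * v l $ r))"
    by (simp add: sum_distrib_left)
  also have "\<dots> = (\<Sum>k<N. \<Sum>l<N. a k * b l * (if k = l then 1 else 0))"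
    by (intro sum.cong refl, simp add: dot)
  also have "\<dots> = (\<Sum>k<N. a k * b k)"
    by (rule sum.cong[OF refl], simp add: if_distrib sum.delta cong: if_cong)
  finally show ?thesis .
qed

end


lemma SM:
  fixes Bf X0 :: "nat \<Rightarrow> nat \<Rightarrow> real" and u y :: "nat \<Rightarrow> real"
  assumes inv: "\<And>r c. r<n \<Longrightarrow> c<n \<Longrightarrow> (\<Sum>s<n. Bf r s * X0 s c) = (if r = c then 1 else 0)"
    and sym: "\<And>r c. r<n \<Longrightarrow> c<n \<Longrightarrow> X0 r c = X0 c r"
    and ij: "i<n" "j<n" "i\<noteq>j"
    and u_def: "u = (\<lambda>s. (if s = i then 1 else 0) - (if s = j then 1 else 0))"
    and y_def: "y = (\<lambda>s. X0 s i - X0 s j)"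
    and nz: "1 + \<epsilon> * (y i - y j) \<noteq> 0"
    and rc: "r<n" "c<n"
  shows "(\<Sum>s<n. (Bf r s + \<epsilon> * u r * u s) * (X0 s c - \<epsilon> / (1 + \<epsilon>*(y i - y j)) * y s * y c))
     = (if r = c then 1 else 0)"
proof -
  define \<kappa> where "\<kappa> = \<epsilon> / (1 + \<epsilon>*(y i - y j))"
  have k: "\<kappa> * (1 + \<epsilon>*(y i - y j)) = \<epsilon>" unfolding \<kappa>_def using nz by simp
  have "(\<Sum>s<n. (Bf r s + \<epsilon> * u r * u s) * (X0 s c - \<kappa> * y s * y c))
     = (\<Sum>s<n. Bf r s * X0 s c - (\<kappa>*y c) * (Bf r s * y s) + (\<epsilon>*u r) * (u s * X0 s c)
          - (\<epsilon>*\<kappa>*u r*y c) * (u s * y s))"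
    by (rule sum.cong[OF refl], simp add: algebra_simps)
  also have "\<dots> = (\<Sum>s<n. Bf r s * X0 s c) - (\<kappa>*y c) * (\<Sum>s<n. Bf r s * y s)
        + (\<epsilon>*u r) * (\<Sum>s<n. u s * X0 s c) - (\<epsilon>*\<kappa>*u r*y c) * (\<Sum>s<n. u s * y s)"
    by (simp add: sum.distrib sum_subtractf sum_distrib_left)
  also have "(\<Sum>s<n. Bf r s * y s) = u r"
  proof -
    have "(\<Sum>s<n. Bf r s * y s) = (\<Sum>s<n. Bf r s * X0 s i) - (\<Sum>s<n. Bf r s * X0 s j)"
      unfolding y_def by (simp add: right_diff_distrib sum_subtractf)
    thus ?thesis using inv[OF rc(1) ij(1)] inv[OF rc(1) ij(2)] unfolding u_def by simp
  qed
  also have "(\<Sum>s<n. u s * X0 s c) = y c"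
    unfolding u_def y_def using sum_u[OF ij, of "\<lambda>s. X0 s c"] sym[OF ij(1) rc(2)] sym[OF ij(2) rc(2)] by simp
  also have "(\<Sum>s<n. u s * y s) = y i - y j"
    unfolding u_def using sum_u[OF ij, of y] by simp
  also have "(\<Sum>s<n. Bf r s * X0 s c) = (if r = c then 1 else 0)" using inv[OF rc] .
  finally have "(\<Sum>s<n. (Bf r s + \<epsilon> * u r * u s) * (X0 s c - \<kappa> * y s * y c))
     = (if r = c then 1 else 0) + u r * y c * (\<epsilon> - \<kappa> * (1 + \<epsilon>*(y i - y j)))"
    by (simp add: algebra_simps)
  thus ?thesis using k unfolding \<kappa>_def by simp
qed


lemma resolvent_sum:
  fixes M X :: "real mat"
  assumes M: "M \<in> carrier_mat n n" and X: "X \<in> carrier_mat n n"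
    and BX: "(\<beta> \<cdot>\<^sub>m 1\<^sub>m n - M) * X = 1\<^sub>m n"
    and cp: "char_poly M = (\<Prod>r\<leftarrow>L. [:-r,1:])"
  shows "\<beta> \<notin> set L" "(\<Sum>r\<leftarrow>L. 1/(\<beta> - r)) = (\<Sum>i<n. X $$ (i,i))"
proof -
  note T = trace_inv[OF M X BX]
  have nz: "poly (\<Prod>r\<leftarrow>L. [:-r,1:]) \<beta> \<noteq> 0" using T(1) cp by simp
  thus "\<beta> \<notin> set L" by (auto simp: poly_prod_list prod_list_zero_iff)
  from logderiv_prod[OF nz] T(2) cp nz
  show "(\<Sum>r\<leftarrow>L. 1/(\<beta> - r)) = (\<Sum>i<n. X $$ (i,i))" by simp
qed

context spec
begin

definition X0f :: "real \<Rightarrow> nat \<Rightarrow> nat \<Rightarrow> real" where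
  "X0f \<beta> r c = (\<Sum>k<N. v k $ r * v k $ c / (\<beta> - lam k))"

lemma X0_inv:
  assumes hb: "\<And>k. k < N \<Longrightarrow> \<beta> \<noteq> lam k" and rc: "r < N" "c < N"
  shows "(\<Sum>s<N. ((if r = s then \<beta> else 0) - P $$ (r,s)) * X0f \<beta> s c) = (if r = c then 1 else 0)"
proof -
  have "(\<Sum>s<N. ((if r = s then \<beta> else 0) - P $$ (r,s)) * X0f \<beta> s c)
      = (\<Sum>s<N. (if r = s then \<beta> * X0f \<beta> s c else 0)) - (\<Sum>s<N. P $$ (r,s) * X0f \<beta> s c)"
    unfolding sum_subtractf[symmetric] by (rule sum.cong[OF refl], simp add: algebra_simps)
  also have "(\<Sum>s<N. (if r = s then \<beta> * X0f \<beta> s c else 0)) = \<beta> * X0f \<beta> r c"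
    using rc by (simp add: sum.delta)
  also have "(\<Sum>s<N. P $$ (r,s) * X0f \<beta> s c) = (\<Sum>k<N. lam k * v k $ r * v k $ c / (\<beta> - lam k))"
  proof -
    have "(\<Sum>s<N. P $$ (r,s) * X0f \<beta> s c) = (\<Sum>s<N. \<Sum>k<N. P $$ (r,s) * v k $ s * (v k $ c / (\<beta> - lam k)))"
      unfolding X0f_def by (simp add: sum_distrib_left mult.assoc)
    also have "\<dots> = (\<Sum>k<N. \<Sum>s<N. P $$ (r,s) * v k $ s * (v k $ c / (\<beta> - lam k)))"
      by (rule sum.swap)
    also have "\<dots> = (\<Sum>k<N. (\<Sum>s<N. P $$ (r,s) * v k $ s) * (v k $ c / (\<beta> - lam k)))"
      by (simp only: sum_distrib_right)
    also have "\<dots> = (\<Sum>k<N. lam k * v k $ r * v k $ c / (\<beta> - lam k))"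
      by (rule sum.cong[OF refl], simp add: Pv rc)
    finally show ?thesis .
  qed
  also have "\<beta> * X0f \<beta> r c - (\<Sum>k<N. lam k * v k $ r * v k $ c / (\<beta> - lam k)) = (\<Sum>k<N. v k $ r * v k $ c)"
    unfolding X0f_def sum_distrib_left sum_subtractf[symmetric]
  proof (rule sum.cong[OF refl])
    fix k assume "k \<in> {..<N}"
    hence nz: "\<beta> - lam k \<noteq> 0" using hb by auto
    have "\<beta> * (v k $ r * v k $ c / (\<beta> - lam k)) - lam k * v k $ r * v k $ c / (\<beta> - lam k)
        = ((\<beta> - lam k) * (v k $ r * v k $ c)) / (\<beta> - lam k)"
      by (simp add: diff_divide_distrib left_diff_distrib mult.assoc)
    also have "\<dots> = v k $ r * v k $ c" using nz by simp
    finally show "\<beta> * (v k $ r * v k $ c / (\<beta> - lam k)) - lam k * v k $ r * v k $ c / (\<beta> - lam k) = v k $ r * v k $ c" .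
  qed
  also have "\<dots> = (if r = c then 1 else 0)" using compl rc by simp
  finally show ?thesis .
qed

lemma X0_sym: "X0f \<beta> r c = X0f \<beta> c r"
  unfolding X0f_def by (simp add: mult.commute)

lemma y_expand: "X0f \<beta> s i - X0f \<beta> s j = (\<Sum>k<N. ((v k $ i - v k $ j) / (\<beta> - lam k)) * v k $ s)"
  unfolding X0f_def sum_subtractf[symmetric]
  by (rule sum.cong[OF refl], simp add: diff_divide_distrib[symmetric] left_diff_distrib)

lemma d_expand: "(X0f \<beta> i i - X0f \<beta> i j) - (X0f \<beta> j i - X0f \<beta> j j) = (\<Sum>k<N. (v k $ i - v k $ j)\<^sup>2 / (\<beta> - lam k))"
  unfolding y_expand sum_subtractf[symmetric]
  by (rule sum.cong[OF refl], simp add: diff_divide_distrib[symmetric] right_diff_distrib[symmetric] power2_eq_square)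

lemma Y_expand: "(\<Sum>s<N. (X0f \<beta> s i - X0f \<beta> s j)\<^sup>2) = (\<Sum>k<N. ((v k $ i - v k $ j) / (\<beta> - lam k))\<^sup>2)"
  unfolding y_expand power2_eq_square by (rule orthsum)

end


lemma pf_pq:
  fixes a \<alpha> p q :: real assumes a: "a \<noteq> 0" and p: "p \<noteq> 0" and q: "q \<noteq> 0" and pq: "q = 2 - p"
  shows "(\<alpha> + (1-p)/a)\<^sup>2 / (p*q) = - 1/a\<^sup>2 + (1 + a*\<alpha>)\<^sup>2/(2*a^3) / (p/a)
      + (- (1 - a*\<alpha>)\<^sup>2/(2*a^3)) / (-q/a)"
proof -
  have "(\<alpha> + (1-p)/a)\<^sup>2 / (p*q) - (- 1/a\<^sup>2 + (1 + a*\<alpha>)\<^sup>2/(2*a^3) / (p/a)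
      + (- (1 - a*\<alpha>)\<^sup>2/(2*a^3)) / (-q/a)) = 0"
    using a p q by (simp add: field_simps power2_eq_square power3_eq_cube) (simp add: pq algebra_simps)
  thus ?thesis by simp
qed

lemma H_pq:
  fixes a \<alpha> p q :: real assumes a: "a \<noteq> 0" and p: "p \<noteq> 0" and q: "q \<noteq> 0" and pq: "q = 2 - p"
  shows "(2 * (1 - \<alpha>\<^sup>2 * a\<^sup>2) * (\<alpha> + (1-p)/a) + 2 * a\<^sup>2 * \<alpha> * (\<alpha> + (1-p)/a)\<^sup>2) / (p*q)\<^sup>2
     = (1 + a*\<alpha>)\<^sup>2/(2*a^3) / (p/a)\<^sup>2 + (- (1 - a*\<alpha>)\<^sup>2/(2*a^3)) / (-q/a)\<^sup>2"
proof -
  have "(2 * (1 - \<alpha>\<^sup>2 * a\<^sup>2) * (\<alpha> + (1-p)/a) + 2 * a\<^sup>2 * \<alpha> * (\<alpha> + (1-p)/a)\<^sup>2) / (p*q)\<^sup>2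
     - ((1 + a*\<alpha>)\<^sup>2/(2*a^3) / (p/a)\<^sup>2 + (- (1 - a*\<alpha>)\<^sup>2/(2*a^3)) / (-q/a)\<^sup>2) = 0"
    using a p q by (simp add: field_simps power2_eq_square power3_eq_cube) (simp add: pq algebra_simps)
  thus ?thesis by simp
qed

lemma pf_setup:
  fixes a \<alpha> \<rho> :: real assumes a: "a \<noteq> 0" and r1: "\<rho> \<noteq> \<alpha> + 1/a" and r2: "\<rho> \<noteq> \<alpha> - 1/a"
  defines "p \<equiv> 1 - a*(\<rho>-\<alpha>)" and "q \<equiv> 1 + a*(\<rho>-\<alpha>)"
  shows "p \<noteq> 0" "q \<noteq> 0" "q = 2 - p" "\<alpha> + (1-p)/a = \<rho>" "1 - a\<^sup>2*(\<rho>-\<alpha>)\<^sup>2 = p*q"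
    "(\<alpha> + 1/a) - \<rho> = p/a" "(\<alpha> - 1/a) - \<rho> = -q/a"
proof -
  show "p \<noteq> 0"
  proof
    assume "p = 0"
    hence "\<rho> = \<alpha> + 1/a" using a unfolding p_def by (simp add: field_simps)
    with r1 show False by simp
  qed
  show "q \<noteq> 0"
  proof
    assume "q = 0"
    hence "\<rho> = \<alpha> - 1/a" using a unfolding q_def by (simp add: field_simps)
    with r2 show False by simp
  qed
  show "q = 2 - p" unfolding p_def q_def by simp
  show "\<alpha> + (1-p)/a = \<rho>" unfolding p_def using a by (simp add: field_simps)
  show "1 - a\<^sup>2*(\<rho>-\<alpha>)\<^sup>2 = p*q" unfolding p_def q_def by (simp add: algebra_simps power2_eq_square)
  show "(\<alpha> + 1/a) - \<rho> = p/a" unfolding p_def using a by (simp add: field_simps)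
  show "(\<alpha> - 1/a) - \<rho> = -q/a" unfolding q_def using a by (simp add: field_simps)
qed

lemma pf:
  fixes a \<alpha> \<rho> :: real assumes a: "a \<noteq> 0" and r1: "\<rho> \<noteq> \<alpha> + 1/a" and r2: "\<rho> \<noteq> \<alpha> - 1/a"
  shows "\<rho>\<^sup>2 / (1 - a\<^sup>2 * (\<rho> - \<alpha>)\<^sup>2) = - 1/a\<^sup>2 + (1 + a*\<alpha>)\<^sup>2/(2*a^3) / ((\<alpha> + 1/a) - \<rho>)
      + (- (1 - a*\<alpha>)\<^sup>2/(2*a^3)) / ((\<alpha> - 1/a) - \<rho>)"
proof -
  note S = pf_setup[OF a r1 r2]
  from pf_pq[OF a S(1) S(2) S(3), of \<alpha>] show ?thesis unfolding S(4-7) .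
qed

lemma H:
  fixes a \<alpha> \<rho> :: real assumes a: "a \<noteq> 0" and r1: "\<rho> \<noteq> \<alpha> + 1/a" and r2: "\<rho> \<noteq> \<alpha> - 1/a"
  shows "(2 * (1 - \<alpha>\<^sup>2 * a\<^sup>2) * \<rho> + 2 * a\<^sup>2 * \<alpha> * \<rho>\<^sup>2) / (1 - a\<^sup>2 * (\<rho> - \<alpha>)\<^sup>2)\<^sup>2
     = (1 + a*\<alpha>)\<^sup>2/(2*a^3) / ((\<alpha> + 1/a) - \<rho>)\<^sup>2
      + (- (1 - a*\<alpha>)\<^sup>2/(2*a^3)) / ((\<alpha> - 1/a) - \<rho>)\<^sup>2"
proof -
  note S = pf_setup[OF a r1 r2]
  from H_pq[OF a S(1) S(2) S(3), of \<alpha>] show ?thesis unfolding S(4-7) .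
qed


lemma deltaP_carrier: "deltaP N i j \<in> carrier_mat N N" unfolding deltaP_def by simp

lemma deltaP_entry: "r < N \<Longrightarrow> s < N \<Longrightarrow> deltaP N i j $$ (r,s) =
   - (((if r = i then 1 else 0) - (if r = j then 1 else 0)) * ((if s = i then 1 else 0) - (if s = j then 1 else 0)))"
  unfolding deltaP_def by simp

context spec
begin

lemma beta_facts:
  assumes hb: "\<And>k. k<N \<Longrightarrow> \<beta> \<noteq> lam k" and ij: "i<N" "j<N" "i\<noteq>j"
  defines "d \<equiv> \<Sum>k<N. (v k $ i - v k $ j)\<^sup>2/(\<beta> - lam k)"
    and "Y \<equiv> \<Sum>k<N. ((v k $ i - v k $ j)/(\<beta> - lam k))\<^sup>2"
    and "T0 \<equiv> \<Sum>r<N. X0f \<beta> r r"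
  shows "char_poly P = (\<Prod>r\<leftarrow>L. [:-r,1:]) \<Longrightarrow> \<beta> \<notin> set L \<and> (\<Sum>r\<leftarrow>L. 1/(\<beta>-r)) = T0"
    "1 + \<epsilon>*d \<noteq> 0 \<Longrightarrow> char_poly (P + \<epsilon> \<cdot>\<^sub>m deltaP N i j) = (\<Prod>r\<leftarrow>L. [:-r,1:]) \<Longrightarrow>
       \<beta> \<notin> set L \<and> (\<Sum>r\<leftarrow>L. 1/(\<beta>-r)) = T0 - \<epsilon>/(1+\<epsilon>*d) * Y"
proof -
  define Bf where "Bf = (\<lambda>r s. (if r = s then \<beta> else 0) - P $$ (r,s))"
  have inv: "\<And>r c. r<N \<Longrightarrow> c<N \<Longrightarrow> (\<Sum>s<N. Bf r s * X0f \<beta> s c) = (if r = c then 1 else 0)"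
    unfolding Bf_def using X0_inv[OF hb] by blast
  have Bent: "(\<beta> \<cdot>\<^sub>m 1\<^sub>m N - P) $$ (r,s) = Bf r s" if "r < N" "s < N" for r s
    using that P_carrier unfolding Bf_def by auto
  {
    assume cp: "char_poly P = (\<Prod>r\<leftarrow>L. [:-r,1:])"
    define X where "X = mat N N (\<lambda>(r,c). X0f \<beta> r c)"
    have Xc: "X \<in> carrier_mat N N" unfolding X_def by simp
    have BX: "(\<beta> \<cdot>\<^sub>m 1\<^sub>m N - P) * X = 1\<^sub>m N"
    proof (rule eq_matI)
      fix r c assume "r < dim_row (1\<^sub>m N)" "c < dim_col (1\<^sub>m N)"
      hence r: "r < N" and c: "c < N" by auto
      have Bc: "\<beta> \<cdot>\<^sub>m 1\<^sub>m N - P \<in> carrier_mat N N" using P_carrier by auto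
      have "((\<beta> \<cdot>\<^sub>m 1\<^sub>m N - P) * X) $$ (r,c) = (\<Sum>s<N. Bf r s * X0f \<beta> s c)"
        unfolding mat_mult_entry[OF Bc Xc r c] using Bent r c unfolding X_def by (intro sum.cong refl) simp
      thus "((\<beta> \<cdot>\<^sub>m 1\<^sub>m N - P) * X) $$ (r,c) = 1\<^sub>m N $$ (r,c)" using inv[OF r c] r c by simp
    qed (insert P_carrier, auto simp: X_def)
    note R = resolvent_sum[OF P_carrier Xc BX cp]
    have "(\<Sum>i<N. X $$ (i,i)) = T0" unfolding T0_def X_def by simp
    thus "\<beta> \<notin> set L \<and> (\<Sum>r\<leftarrow>L. 1/(\<beta>-r)) = T0" using R by simp
  }
  {
    assume nz: "1 + \<epsilon>*d \<noteq> 0" and cp: "char_poly (P + \<epsilon> \<cdot>\<^sub>m deltaP N i j) = (\<Prod>r\<leftarrow>L. [:-r,1:])"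
    define y where "y = (\<lambda>s. X0f \<beta> s i - X0f \<beta> s j)"
    define u where "u = (\<lambda>s. (if s = i then 1 else 0) - (if s = j then (1::real) else 0))"
    have dy: "y i - y j = d" unfolding y_def d_def using d_expand by simp
    define X where "X = mat N N (\<lambda>(r,c). X0f \<beta> r c - \<epsilon> / (1 + \<epsilon>*(y i - y j)) * y r * y c)"
    have Xc: "X \<in> carrier_mat N N" unfolding X_def by simp
    have Pe: "P + \<epsilon> \<cdot>\<^sub>m deltaP N i j \<in> carrier_mat N N" using P_carrier deltaP_carrier by auto
    have BX: "(\<beta> \<cdot>\<^sub>m 1\<^sub>m N - (P + \<epsilon> \<cdot>\<^sub>m deltaP N i j)) * X = 1\<^sub>m N"
    proof (rule eq_matI)
      fix r c assume "r < dim_row (1\<^sub>m N)" "c < dim_col (1\<^sub>m N)"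
      hence r: "r < N" and c: "c < N" by auto
      have Bc: "\<beta> \<cdot>\<^sub>m 1\<^sub>m N - (P + \<epsilon> \<cdot>\<^sub>m deltaP N i j) \<in> carrier_mat N N" by (rule minus_carrier_mat[OF Pe])
      have ent: "(\<beta> \<cdot>\<^sub>m 1\<^sub>m N - (P + \<epsilon> \<cdot>\<^sub>m deltaP N i j)) $$ (r,s) = Bf r s + \<epsilon> * u r * u s"
        if s: "s < N" for s
      proof -
        have "(\<beta> \<cdot>\<^sub>m 1\<^sub>m N - (P + \<epsilon> \<cdot>\<^sub>m deltaP N i j)) $$ (r,s)
          = (if r = s then \<beta> else 0) - (P$$(r,s) + \<epsilon> * deltaP N i j $$ (r,s))"
          using r s P_carrier deltaP_carrier[of N i j] by simp
        thus ?thesis unfolding deltaP_entry[OF r s] Bf_def u_def by (simp add: algebra_simps)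
      qed
      have "((\<beta> \<cdot>\<^sub>m 1\<^sub>m N - (P + \<epsilon> \<cdot>\<^sub>m deltaP N i j)) * X) $$ (r,c)
         = (\<Sum>s<N. (Bf r s + \<epsilon> * u r * u s) * (X0f \<beta> s c - \<epsilon> / (1 + \<epsilon>*(y i - y j)) * y s * y c))"
        unfolding mat_mult_entry[OF Bc Xc r c]
      proof (rule sum.cong[OF refl])
        fix s assume "s \<in> {..<N}"
        hence s: "s < N" by simp
        show "(\<beta> \<cdot>\<^sub>m 1\<^sub>m N - (P + \<epsilon> \<cdot>\<^sub>m deltaP N i j)) $$ (r, s) * X $$ (s, c) =
          (Bf r s + \<epsilon> * u r * u s) * (X0f \<beta> s c - \<epsilon> / (1 + \<epsilon>*(y i - y j)) * y s * y c)"
          unfolding ent[OF s] using s c unfolding X_def by simp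
      qed
      also have "\<dots> = (if r = c then 1 else 0)"
      proof -
        have symX: "\<And>r c. r<N \<Longrightarrow> c<N \<Longrightarrow> X0f \<beta> r c = X0f \<beta> c r" by (rule X0_sym)
        have nz': "1 + \<epsilon>*(y i - y j) \<noteq> 0" using nz dy by simp
        show ?thesis by (rule SM[OF inv symX ij u_def y_def nz' r c])
      qed
      finally show "((\<beta> \<cdot>\<^sub>m 1\<^sub>m N - (P + \<epsilon> \<cdot>\<^sub>m deltaP N i j)) * X) $$ (r,c) = 1\<^sub>m N $$ (r,c)"
        using r c by simp
    qed (insert Pe, auto simp: X_def)
    note R = resolvent_sum[OF Pe Xc BX cp]
    have "(\<Sum>r<N. X $$ (r,r)) = (\<Sum>r<N. X0f \<beta> r r - \<epsilon> / (1 + \<epsilon>*d) * (y r)\<^sup>2)"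
      unfolding X_def dy by (intro sum.cong refl, simp add: power2_eq_square)
    also have "\<dots> = T0 - \<epsilon>/(1+\<epsilon>*d) * (\<Sum>r<N. (y r)\<^sup>2)"
      unfolding T0_def by (simp add: sum_subtractf sum_distrib_left)
    also have "(\<Sum>r<N. (y r)\<^sup>2) = Y" unfolding y_def Y_def by (rule Y_expand)
    finally show "\<beta> \<notin> set L \<and> (\<Sum>r\<leftarrow>L. 1/(\<beta>-r)) = T0 - \<epsilon>/(1+\<epsilon>*d) * Y" using R by simp
  }
qed

end

lemma zk_val:
  fixes x :: "real vec"
  assumes x: "x \<in> carrier_vec N" and ij: "i < N" "j < N" "i \<noteq> j"
  shows "x \<bullet> (deltaP N i j *\<^sub>v x) = - (x$i - x$j)\<^sup>2"
proof -
  define u where "u = (\<lambda>s. (if s = i then 1 else 0) - (if s = j then (1::real) else 0))"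
  have e: "(deltaP N i j *\<^sub>v x) $ r = - (u r * (x$i - x$j))" if r: "r < N" for r
  proof -
    have "(deltaP N i j *\<^sub>v x) $ r = (\<Sum>s<N. deltaP N i j $$ (r,s) * x $ s)"
      by (rule mat_vec_entry[OF deltaP_carrier x r])
    also have "\<dots> = (\<Sum>s<N. (- u r) * (u s * x $ s))"
      by (rule sum.cong[OF refl], simp add: deltaP_entry r u_def)
    also have "\<dots> = - u r * (\<Sum>s<N. u s * x $ s)" by (simp add: sum_distrib_left)
    also have "(\<Sum>s<N. u s * x $ s) = x$i - x$j" unfolding u_def by (rule sum_u[OF ij])
    finally show ?thesis by simp
  qed
  have "x \<bullet> (deltaP N i j *\<^sub>v x) = (\<Sum>r<N. x$r * (deltaP N i j *\<^sub>v x) $ r)"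
    using x deltaP_carrier[of N i j] by (simp add: scalar_prod_def lessThan_atLeast0)
  also have "\<dots> = (\<Sum>r<N. (- (x$i - x$j)) * (u r * x$r))"
    by (rule sum.cong[OF refl], simp add: e algebra_simps)
  also have "\<dots> = (- (x$i - x$j)) * (\<Sum>r<N. u r * x$r)" by (simp add: sum_distrib_left)
  also have "(\<Sum>r<N. u r * x$r) = x$i - x$j" unfolding u_def by (rule sum_u[OF ij])
  finally show ?thesis by (simp add: power2_eq_square algebra_simps)
qed


lemma msd_list:
  assumes "eigs M = mset L"
  shows "msd_tilde N a sr sw M \<alpha> = sr\<^sup>2 / (1 - a\<^sup>2 * (1 - \<alpha>)\<^sup>2)
     + 1 / real N * (a\<^sup>2 * \<alpha>\<^sup>2 * sw\<^sup>2 * (\<Sum>l\<leftarrow>L. l\<^sup>2 / (1 - a\<^sup>2 * (l - \<alpha>)\<^sup>2)))"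
proof -
  have "sum_mset (image_mset (\<lambda>l. a\<^sup>2 * \<alpha>\<^sup>2 * sw\<^sup>2 * l\<^sup>2 / (1 - a\<^sup>2 * (l - \<alpha>)\<^sup>2)) (eigs M))
      = (\<Sum>l\<leftarrow>L. a\<^sup>2 * \<alpha>\<^sup>2 * sw\<^sup>2 * l\<^sup>2 / (1 - a\<^sup>2 * (l - \<alpha>)\<^sup>2))"
    unfolding assms mset_map[symmetric] sum_mset_sum_list ..
  also have "\<dots> = (\<Sum>l\<leftarrow>L. (a\<^sup>2 * \<alpha>\<^sup>2 * sw\<^sup>2) * (l\<^sup>2 / (1 - a\<^sup>2 * (l - \<alpha>)\<^sup>2)))"
    by (rule arg_cong[where f=sum_list], rule map_cong[OF refl], simp)
  also have "\<dots> = (a\<^sup>2 * \<alpha>\<^sup>2 * sw\<^sup>2) * (\<Sum>l\<leftarrow>L. l\<^sup>2 / (1 - a\<^sup>2 * (l - \<alpha>)\<^sup>2))"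
    by (rule sum_list_const_mult)
  finally show ?thesis unfolding msd_tilde_def by simp
qed


lemma sumG:
  fixes a \<alpha> :: real and L :: "real list"
  assumes a: "a \<noteq> 0" and b1: "\<alpha> + 1/a \<notin> set L" and b2: "\<alpha> - 1/a \<notin> set L"
  shows "(\<Sum>l\<leftarrow>L. l\<^sup>2 / (1 - a\<^sup>2 * (l - \<alpha>)\<^sup>2)) = real (length L) * (- 1/a\<^sup>2)
     + (1 + a*\<alpha>)\<^sup>2/(2*a^3) * (\<Sum>l\<leftarrow>L. 1 / ((\<alpha> + 1/a) - l))
     + (- (1 - a*\<alpha>)\<^sup>2/(2*a^3)) * (\<Sum>l\<leftarrow>L. 1 / ((\<alpha> - 1/a) - l))"
  using b1 b2
proof (induction L)
  case (Cons l L)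
  have l1: "l \<noteq> \<alpha> + 1/a" and l2: "l \<noteq> \<alpha> - 1/a" using Cons.prems by auto
  have IH: "(\<Sum>l\<leftarrow>L. l\<^sup>2 / (1 - a\<^sup>2 * (l - \<alpha>)\<^sup>2)) = real (length L) * (- 1/a\<^sup>2)
     + (1 + a*\<alpha>)\<^sup>2/(2*a^3) * (\<Sum>l\<leftarrow>L. 1 / ((\<alpha> + 1/a) - l))
     + (- (1 - a*\<alpha>)\<^sup>2/(2*a^3)) * (\<Sum>l\<leftarrow>L. 1 / ((\<alpha> - 1/a) - l))" using Cons by auto
  have P1: "l\<^sup>2 / (1 - a\<^sup>2 * (l - \<alpha>)\<^sup>2) = - 1/a\<^sup>2 + (1 + a*\<alpha>)\<^sup>2/(2*a^3) * (1 / ((\<alpha> + 1/a) - l))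
      + (- (1 - a*\<alpha>)\<^sup>2/(2*a^3)) * (1 / ((\<alpha> - 1/a) - l))"
    using pf[OF a l1 l2] by simp
  have alg: "\<And>g G k A B t s S T (n::real). g = k + A*t + B*s \<Longrightarrow> G = n*k + A*S + B*T \<Longrightarrow>
      g + G = (n+1)*k + A*(t+S) + B*(s+T)" by (simp add: algebra_simps)
  have "(\<Sum>l\<leftarrow>l#L. l\<^sup>2 / (1 - a\<^sup>2 * (l - \<alpha>)\<^sup>2)) = l\<^sup>2 / (1 - a\<^sup>2 * (l - \<alpha>)\<^sup>2) + (\<Sum>l\<leftarrow>L. l\<^sup>2 / (1 - a\<^sup>2 * (l - \<alpha>)\<^sup>2))"
    by (simp only: list.map sum_list.Cons)
  also have "\<dots> = (real (length L) + 1) * (- 1/a\<^sup>2)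
     + (1 + a*\<alpha>)\<^sup>2/(2*a^3) * (1 / ((\<alpha> + 1/a) - l) + (\<Sum>l\<leftarrow>L. 1 / ((\<alpha> + 1/a) - l)))
     + (- (1 - a*\<alpha>)\<^sup>2/(2*a^3)) * (1 / ((\<alpha> - 1/a) - l) + (\<Sum>l\<leftarrow>L. 1 / ((\<alpha> - 1/a) - l)))"
    by (rule alg[OF P1 IH])
  also have "\<dots> = real (length (l#L)) * (- 1/a\<^sup>2)
     + (1 + a*\<alpha>)\<^sup>2/(2*a^3) * (\<Sum>l\<leftarrow>l#L. 1 / ((\<alpha> + 1/a) - l))
     + (- (1 - a*\<alpha>)\<^sup>2/(2*a^3)) * (\<Sum>l\<leftarrow>l#L. 1 / ((\<alpha> - 1/a) - l))"
    by (simp only: list.map sum_list.Cons list.size(4) of_nat_add) simp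
  finally show ?case .
qed simp


lemma eig_bound:
  fixes P :: "real mat" and x :: "real vec"
  assumes P: "P \<in> carrier_mat N N" and N: "N > 0" and x: "x \<in> carrier_vec N" "x \<noteq> 0\<^sub>v N"
    and ev: "P *\<^sub>v x = l \<cdot>\<^sub>v x"
    and rho: "spectral_radius (map_mat complex_of_real (a \<cdot>\<^sub>m (P - \<alpha> \<cdot>\<^sub>m 1\<^sub>m N))) < 1"
  shows "\<bar>a * (l - \<alpha>)\<bar> < 1"
proof -
  define A where "A = a \<cdot>\<^sub>m (P - \<alpha> \<cdot>\<^sub>m 1\<^sub>m N)"
  have Ac: "A \<in> carrier_mat N N" unfolding A_def using P by auto
  have Pent: "(\<Sum>s<N. P $$ (r,s) * x $ s) = l * x $ r" if r: "r < N" for r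
  proof -
    have "(P *\<^sub>v x) $ r = (l \<cdot>\<^sub>v x) $ r" using ev by simp
    thus ?thesis using mat_vec_entry[OF P x(1) r] r x(1) by simp
  qed
  have Aent: "(\<Sum>s<N. A $$ (r,s) * x $ s) = a * (l - \<alpha>) * x $ r" if r: "r < N" for r
  proof -
    have "(\<Sum>s<N. A $$ (r,s) * x $ s) = (\<Sum>s<N. a * (P $$ (r,s) * x $ s) - (if s = r then a * \<alpha> * x $ s else 0))"
      by (rule sum.cong[OF refl], insert r P, auto simp: A_def algebra_simps)
    also have "\<dots> = a * (\<Sum>s<N. P $$ (r,s) * x $ s) - a * \<alpha> * x $ r"
      using r by (simp add: sum_subtractf sum_distrib_left sum.delta')
    also have "\<dots> = a * (l - \<alpha>) * x $ r" using Pent[OF r] by (simp add: algebra_simps)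
    finally show ?thesis .
  qed
  let ?A = "map_mat complex_of_real A"
  let ?x = "map_vec complex_of_real x"
  have Ac': "?A \<in> carrier_mat N N" using Ac by simp
  have "eigenvector ?A ?x (of_real (a * (l - \<alpha>)))"
    unfolding eigenvector_def
  proof (intro conjI)
    show "?x \<in> carrier_vec (dim_row ?A)" using x Ac by simp
    show "?x \<noteq> 0\<^sub>v (dim_row ?A)" using x Ac of_real_hom.vec_hom_zero_iff by simp
    show "?A *\<^sub>v ?x = of_real (a * (l - \<alpha>)) \<cdot>\<^sub>v ?x"
    proof (rule eq_vecI)
      fix r assume "r < dim_vec (of_real (a * (l - \<alpha>)) \<cdot>\<^sub>v ?x)"
      hence r: "r < N" using x by simp
      have "(?A *\<^sub>v ?x) $ r = (\<Sum>s<N. ?A $$ (r,s) * ?x $ s)"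
        by (rule mat_vec_entry[OF Ac'], insert x, auto simp: r)
      also have "\<dots> = of_real (\<Sum>s<N. A $$ (r,s) * x $ s)"
        using r Ac x by simp
      also have "\<dots> = (of_real (a * (l - \<alpha>)) \<cdot>\<^sub>v ?x) $ r" using Aent[OF r] r x by simp
      finally show "(?A *\<^sub>v ?x) $ r = (of_real (a * (l - \<alpha>)) \<cdot>\<^sub>v ?x) $ r" .
    qed (insert x Ac, auto)
  qed
  hence "of_real (a * (l - \<alpha>)) \<in> spectrum ?A" unfolding spectrum_def eigenvalue_def by auto
  hence "cmod (of_real (a * (l - \<alpha>))) \<le> spectral_radius ?A"
    using spectral_radius_mem_max(2)[OF Ac' N] by auto
  moreover have "cmod (of_real (a * (l - \<alpha>))) = \<bar>a * (l - \<alpha>)\<bar>" by (rule norm_of_real)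
  moreover have "spectral_radius ?A < 1" using rho by (simp only: A_def)
  ultimately show ?thesis by linarith
qed


lemma Min_mono_pointwise:
  fixes f g :: "'a \<Rightarrow> real"
  assumes "finite A" "A \<noteq> {}" "\<And>x. x \<in> A \<Longrightarrow> g x \<le> f x"
  shows "Min (g ` A) \<le> Min (f ` A)"
proof -
  have "Min (f ` A) \<in> f ` A" by (rule Min_in, insert assms(1,2), auto)
  then obtain x0 where x0: "x0 \<in> A" "Min (f ` A) = f x0" by auto
  have "Min (g ` A) \<le> g x0" using assms(1) x0(1) by simp
  also have "\<dots> \<le> f x0" using assms(3) x0(1) .
  finally show ?thesis using x0(2) by simp
qed


lemma alg_final:
  fixes c c0 Nr K A1 A2 T1 T2 Y1 Y2 d1 d2 \<epsilon> :: real
  assumes e: "\<epsilon> \<noteq> 0" and n1: "1+\<epsilon>*d1 \<noteq> 0" and n2: "1+\<epsilon>*d2 \<noteq> 0"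
  shows "((c + 1/Nr*(c0*(Nr*K + A1*(T1 - \<epsilon>/(1+\<epsilon>*d1)*Y1) + A2*(T2 - \<epsilon>/(1+\<epsilon>*d2)*Y2))))
         - (c + 1/Nr*(c0*(Nr*K + A1*T1 + A2*T2))) - c0/Nr * (-\<epsilon>*(A1*Y1 + A2*Y2))) / \<epsilon>\<^sup>2
       = c0/Nr*(A1*Y1*d1/(1+\<epsilon>*d1) + A2*Y2*d2/(1+\<epsilon>*d2))"
proof -
  define k1 where "k1 = \<epsilon>/(1+\<epsilon>*d1)"
  define k2 where "k2 = \<epsilon>/(1+\<epsilon>*d2)"
  have "(c + 1/Nr*(c0*(Nr*K + A1*(T1 - k1*Y1) + A2*(T2 - k2*Y2))))
         - (c + 1/Nr*(c0*(Nr*K + A1*T1 + A2*T2))) - c0/Nr * (-\<epsilon>*(A1*Y1 + A2*Y2))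
      = c0/Nr * (A1*Y1*(\<epsilon> - k1) + A2*Y2*(\<epsilon> - k2))"
    by (simp add: divide_simps) (simp add: algebra_simps)
  moreover have "\<epsilon> - k1 = \<epsilon>\<^sup>2 * (d1/(1+\<epsilon>*d1))" unfolding k1_def using n1 by (simp add: field_simps power2_eq_square)
  moreover have "\<epsilon> - k2 = \<epsilon>\<^sup>2 * (d2/(1+\<epsilon>*d2))" unfolding k2_def using n2 by (simp add: field_simps power2_eq_square)
  ultimately have "(c + 1/Nr*(c0*(Nr*K + A1*(T1 - k1*Y1) + A2*(T2 - k2*Y2))))
         - (c + 1/Nr*(c0*(Nr*K + A1*T1 + A2*T2))) - c0/Nr * (-\<epsilon>*(A1*Y1 + A2*Y2))
      = \<epsilon>\<^sup>2 * (c0/Nr * (A1*Y1*(d1/(1+\<epsilon>*d1)) + A2*Y2*(d2/(1+\<epsilon>*d2))))"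
    by (simp add: algebra_simps)
  thus ?thesis using e unfolding k1_def k2_def by simp
qed


lemma partI:
  fixes N :: nat and a \<alpha> sr sw :: real and P :: "real mat"
    and lam :: "nat \<Rightarrow> real" and v :: "nat \<Rightarrow> real vec"
  assumes N: "N \<ge> 2"
    and P_carrier: "P \<in> carrier_mat N N"
    and P_sym: "P\<^sup>T = P"
    and v_carrier: "\<And>k. k < N \<Longrightarrow> v k \<in> carrier_vec N"
    and v_eig: "\<And>k. k < N \<Longrightarrow> P *\<^sub>v v k = lam k \<cdot>\<^sub>v v k"
    and v_orth: "\<And>k l. k < N \<Longrightarrow> l < N \<Longrightarrow> v k \<bullet> v l = (if k = l then 1 else 0)"
    and rho: "spectral_radius (map_mat complex_of_real (a \<cdot>\<^sub>m (P - \<alpha> \<cdot>\<^sub>m one_mat N))) < 1"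
    and ij: "i < N" "j < N" "i \<noteq> j"
  shows "(\<lambda>\<epsilon>. msd_tilde N a sr sw (P + \<epsilon> \<cdot>\<^sub>m deltaP N i j) \<alpha> - msd_tilde N a sr sw P \<alpha>
              - a\<^sup>2 * \<alpha>\<^sup>2 * sw\<^sup>2 / real N * (\<Sum>k<N. hk N a \<alpha> \<epsilon> (lam k) (v k) i j))
        \<in> O[at_right 0](\<lambda>\<epsilon>. \<epsilon>\<^sup>2)"
proof -
  interpret S: spec N P lam v
    by (unfold_locales, rule P_carrier, rule v_carrier, assumption, rule v_eig, assumption, rule v_orth)
  have N0: "N > 0" using N by simp
  have vnz: "v k \<noteq> 0\<^sub>v N" if k: "k < N" for k
  proof
    assume "v k = 0\<^sub>v N"
    hence "v k \<bullet> v k = 0" by simp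
    with v_orth[OF k k] show False by simp
  qed
  have eb: "\<bar>a * (lam k - \<alpha>)\<bar> < 1" if k: "k < N" for k
    by (rule eig_bound[OF P_carrier N0 v_carrier[OF k] vnz[OF k] v_eig[OF k] rho])
  define \<phi> where "\<phi> = (\<lambda>\<epsilon>. msd_tilde N a sr sw (P + \<epsilon> \<cdot>\<^sub>m deltaP N i j) \<alpha> - msd_tilde N a sr sw P \<alpha>
              - a\<^sup>2 * \<alpha>\<^sup>2 * sw\<^sup>2 / real N * (\<Sum>k<N. hk N a \<alpha> \<epsilon> (lam k) (v k) i j))"
  show ?thesis
  proof (cases "a = 0")
    case True
    have "\<phi> = (\<lambda>_. 0)" unfolding \<phi>_def by (rule ext, simp add: msd_tilde_def True)
    thus ?thesis unfolding \<phi>_def by simp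
  next
    case a: False
    have hb1: "\<alpha> + 1/a \<noteq> lam k" if k: "k < N" for k
    proof
      assume "\<alpha> + 1/a = lam k"
      hence "a * (lam k - \<alpha>) = 1" using a by (simp add: field_simps)
      with eb[OF k] show False by simp
    qed
    have hb2: "\<alpha> - 1/a \<noteq> lam k" if k: "k < N" for k
    proof
      assume "\<alpha> - 1/a = lam k"
      hence "a * (lam k - \<alpha>) = -1" using a by (simp add: field_simps)
      with eb[OF k] show False by simp
    qed
    define d1 where "d1 = (\<Sum>k<N. (v k $ i - v k $ j)\<^sup>2/((\<alpha> + 1/a) - lam k))"
    define Y1 where "Y1 = (\<Sum>k<N. ((v k $ i - v k $ j)/((\<alpha> + 1/a) - lam k))\<^sup>2)"
    define T1 where "T1 = (\<Sum>r<N. S.X0f (\<alpha> + 1/a) r r)"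
    define d2 where "d2 = (\<Sum>k<N. (v k $ i - v k $ j)\<^sup>2/((\<alpha> - 1/a) - lam k))"
    define Y2 where "Y2 = (\<Sum>k<N. ((v k $ i - v k $ j)/((\<alpha> - 1/a) - lam k))\<^sup>2)"
    define T2 where "T2 = (\<Sum>r<N. S.X0f (\<alpha> - 1/a) r r)"
    have hb1': "\<And>k. k < N \<Longrightarrow> \<alpha> + 1/a \<noteq> lam k" using hb1 by blast
    have hb2': "\<And>k. k < N \<Longrightarrow> \<alpha> - 1/a \<noteq> lam k" using hb2 by blast
    have F11: "\<alpha> + 1/a \<notin> set L \<and> (\<Sum>r\<leftarrow>L. 1/((\<alpha> + 1/a)-r)) = T1"
      if "char_poly P = (\<Prod>r\<leftarrow>L. [:-r,1:])" for L
      unfolding T1_def using S.beta_facts(1)[of "\<alpha> + 1/a" i j L] hb1' ij that by blast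
    have F21: "\<alpha> - 1/a \<notin> set L \<and> (\<Sum>r\<leftarrow>L. 1/((\<alpha> - 1/a)-r)) = T2"
      if "char_poly P = (\<Prod>r\<leftarrow>L. [:-r,1:])" for L
      unfolding T2_def using S.beta_facts(1)[of "\<alpha> - 1/a" i j L] hb2' ij that by blast
    have F12: "\<alpha> + 1/a \<notin> set L \<and> (\<Sum>r\<leftarrow>L. 1/((\<alpha> + 1/a)-r)) = T1 - \<epsilon>/(1+\<epsilon>*d1) * Y1"
      if "1 + \<epsilon>*d1 \<noteq> 0" "char_poly (P + \<epsilon> \<cdot>\<^sub>m deltaP N i j) = (\<Prod>r\<leftarrow>L. [:-r,1:])" for L \<epsilon>
      unfolding T1_def d1_def Y1_def
      using S.beta_facts(2)[of "\<alpha> + 1/a" i j \<epsilon> L] hb1' ij that unfolding d1_def by blast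
    have F22: "\<alpha> - 1/a \<notin> set L \<and> (\<Sum>r\<leftarrow>L. 1/((\<alpha> - 1/a)-r)) = T2 - \<epsilon>/(1+\<epsilon>*d2) * Y2"
      if "1 + \<epsilon>*d2 \<noteq> 0" "char_poly (P + \<epsilon> \<cdot>\<^sub>m deltaP N i j) = (\<Prod>r\<leftarrow>L. [:-r,1:])" for L \<epsilon>
      unfolding T2_def d2_def Y2_def
      using S.beta_facts(2)[of "\<alpha> - 1/a" i j \<epsilon> L] hb2' ij that unfolding d2_def by blast
    define K where "K = - 1/a\<^sup>2"
    define A1 where "A1 = (1 + a*\<alpha>)\<^sup>2/(2*a^3)"
    define A2 where "A2 = - (1 - a*\<alpha>)\<^sup>2/(2*a^3)"
    define c where "c = sr\<^sup>2 / (1 - a\<^sup>2 * (1 - \<alpha>)\<^sup>2)"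
    define c0 where "c0 = a\<^sup>2 * \<alpha>\<^sup>2 * sw\<^sup>2"
    have msd_gen: "msd_tilde N a sr sw M \<alpha> = c + 1/real N * (c0 * (real N * K
         + A1 * (\<Sum>l\<leftarrow>L. 1 / ((\<alpha> + 1/a) - l)) + A2 * (\<Sum>l\<leftarrow>L. 1 / ((\<alpha> - 1/a) - l))))"
      if cp: "char_poly M = (\<Prod>r\<leftarrow>L. [:-r,1:])" and len: "length L = N"
        and b1: "\<alpha> + 1/a \<notin> set L" and b2: "\<alpha> - 1/a \<notin> set L" for M L
    proof -
      have "eigs M = mset L" unfolding eigs_def cp by (rule proots_prod_lin)
      from msd_list[OF this, of N a sr sw \<alpha>] sumG[OF a b1 b2] len
      show ?thesis unfolding c_def c0_def K_def A1_def A2_def by simp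
    qed
    obtain L0 where L0: "char_poly P = (\<Prod>r\<leftarrow>L0. [:-r,1:])" "length L0 = N"
      using sym_split[OF P_carrier P_sym] by blast
    have msdP: "msd_tilde N a sr sw P \<alpha> = c + 1/real N * (c0 * (real N * K + A1 * T1 + A2 * T2))"
      using msd_gen[OF L0(1) L0(2)] F11[OF L0(1)] F21[OF L0(1)] by simp
    have hsum: "(\<Sum>k<N. hk N a \<alpha> \<epsilon> (lam k) (v k) i j) = -\<epsilon> * (A1*Y1 + A2*Y2)" for \<epsilon>
    proof -
      have "(\<Sum>k<N. hk N a \<alpha> \<epsilon> (lam k) (v k) i j)
          = (\<Sum>k<N. -\<epsilon> * (A1 * ((v k $ i - v k $ j)/((\<alpha> + 1/a) - lam k))\<^sup>2
                           + A2 * ((v k $ i - v k $ j)/((\<alpha> - 1/a) - lam k))\<^sup>2))"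
      proof (rule sum.cong[OF refl])
        fix k assume "k \<in> {..<N}"
        hence k: "k < N" by simp
        have l1: "lam k \<noteq> \<alpha> + 1/a" and l2: "lam k \<noteq> \<alpha> - 1/a" using hb1[OF k] hb2[OF k] by auto
        have z: "zk N \<epsilon> (v k) i j = \<epsilon> * (- (v k $ i - v k $ j)\<^sup>2)"
          unfolding zk_def using zk_val[OF v_carrier[OF k] ij] by simp
        have "hk N a \<alpha> \<epsilon> (lam k) (v k) i j = zk N \<epsilon> (v k) i j *
            ((2 * (1 - \<alpha>\<^sup>2 * a\<^sup>2) * lam k + 2 * a\<^sup>2 * \<alpha> * (lam k)\<^sup>2) / (1 - a\<^sup>2 * (lam k - \<alpha>)\<^sup>2)\<^sup>2)"
          unfolding hk_def by simp
        also have "\<dots> = \<epsilon> * (- (v k $ i - v k $ j)\<^sup>2) * (A1 / ((\<alpha> + 1/a) - lam k)\<^sup>2 + A2 / ((\<alpha> - 1/a) - lam k)\<^sup>2)"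
          unfolding z H[OF a l1 l2] A1_def A2_def by simp
        also have "\<dots> = -\<epsilon> * (A1 * ((v k $ i - v k $ j)/((\<alpha> + 1/a) - lam k))\<^sup>2
                           + A2 * ((v k $ i - v k $ j)/((\<alpha> - 1/a) - lam k))\<^sup>2)"
          by (simp add: power_divide algebra_simps)
        finally show "hk N a \<alpha> \<epsilon> (lam k) (v k) i j = -\<epsilon> * (A1 * ((v k $ i - v k $ j)/((\<alpha> + 1/a) - lam k))\<^sup>2
                           + A2 * ((v k $ i - v k $ j)/((\<alpha> - 1/a) - lam k))\<^sup>2)" .
      qed
      also have "\<dots> = -\<epsilon> * (A1*Y1 + A2*Y2)"
        unfolding Y1_def Y2_def sum_distrib_left[symmetric] sum.distrib mult_minus_left sum_negf by simp
      finally show ?thesis .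
    qed
    define \<psi> where "\<psi> = (\<lambda>\<epsilon>::real. c0/real N*(A1*Y1*d1/(1+\<epsilon>*d1) + A2*Y2*d2/(1+\<epsilon>*d2)))"
    have key: "\<phi> \<epsilon> / \<epsilon>\<^sup>2 = \<psi> \<epsilon>" if e: "\<epsilon> \<noteq> 0" and n1: "1+\<epsilon>*d1 \<noteq> 0" and n2: "1+\<epsilon>*d2 \<noteq> 0" for \<epsilon>
    proof -
      let ?Pe = "P + \<epsilon> \<cdot>\<^sub>m deltaP N i j"
      have Pec: "?Pe \<in> carrier_mat N N" using P_carrier deltaP_carrier by auto
      have Psym: "P $$ (r,s) = P $$ (s,r)" if "r < N" "s < N" for r s
        using P_sym P_carrier that by (metis carrier_matD index_transpose_mat(1))
      have Pesym: "?Pe\<^sup>T = ?Pe"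
      proof (rule eq_matI)
        fix r s assume "r < dim_row ?Pe" "s < dim_col ?Pe"
        hence r: "r < N" and s: "s < N" using Pec by auto
        show "?Pe\<^sup>T $$ (r,s) = ?Pe $$ (r,s)"
          using r s P_carrier deltaP_carrier[of N i j] Psym[OF r s] deltaP_entry[OF r s, of i j] deltaP_entry[OF s r, of i j]
          by (simp add: algebra_simps)
      qed (insert Pec deltaP_carrier[of N i j], auto)
      obtain Le where Le: "char_poly ?Pe = (\<Prod>r\<leftarrow>Le. [:-r,1:])" "length Le = N"
        using sym_split[OF Pec Pesym] by blast
      note G1 = F12[OF n1 Le(1)] and G2 = F22[OF n2 Le(1)]
      have msdPe: "msd_tilde N a sr sw ?Pe \<alpha> = c + 1/real N * (c0 * (real N * K
          + A1 * (T1 - \<epsilon>/(1+\<epsilon>*d1) * Y1) + A2 * (T2 - \<epsilon>/(1+\<epsilon>*d2) * Y2)))"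
        using msd_gen[OF Le(1) Le(2)] G1 G2 by simp
      have "\<phi> \<epsilon> = (c + 1/real N * (c0 * (real N * K
          + A1 * (T1 - \<epsilon>/(1+\<epsilon>*d1) * Y1) + A2 * (T2 - \<epsilon>/(1+\<epsilon>*d2) * Y2))))
          - (c + 1/real N * (c0 * (real N * K + A1 * T1 + A2 * T2)))
          - c0/real N * (-\<epsilon> * (A1*Y1 + A2*Y2))"
        unfolding \<phi>_def msdPe msdP hsum c0_def by simp
      thus ?thesis unfolding \<psi>_def using alg_final[OF e n1 n2] by simp
    qed
    have lim1: "((\<lambda>\<epsilon>. 1 + \<epsilon>*d) \<longlongrightarrow> 1) (at_right 0)" for d :: real
    proof -
      have "((\<lambda>\<epsilon>. 1 + \<epsilon>*d) \<longlongrightarrow> 1 + 0*d) (at_right 0)"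
        by (intro tendsto_intros)
      thus ?thesis by simp
    qed
    have ev: "\<forall>\<^sub>F \<epsilon> in at_right 0. 0 < \<epsilon> \<and> 0 < 1 + \<epsilon>*d1 \<and> 0 < 1 + \<epsilon>*d2"
    proof -
      have e1: "\<forall>\<^sub>F \<epsilon> in at_right 0. 0 < 1 + \<epsilon>*d1" using order_tendstoD(1)[OF lim1[of d1], of 0] by simp
      have e2: "\<forall>\<^sub>F \<epsilon> in at_right 0. 0 < 1 + \<epsilon>*d2" using order_tendstoD(1)[OF lim1[of d2], of 0] by simp
      have e0: "\<forall>\<^sub>F \<epsilon> in at_right 0. 0 < (\<epsilon>::real)" by (rule eventually_at_right_less)
      show ?thesis using e0 e1 e2 by eventually_elim auto
    qed
    have ev2: "\<forall>\<^sub>F \<epsilon> in at_right 0. \<psi> \<epsilon> = \<phi> \<epsilon> / \<epsilon>\<^sup>2"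
      using ev by eventually_elim (simp add: key)
    have "(\<psi> \<longlongrightarrow> c0/real N*(A1*Y1*d1/1 + A2*Y2*d2/1)) (at_right 0)"
      unfolding \<psi>_def by (intro tendsto_intros lim1) auto
    hence "((\<lambda>\<epsilon>. \<phi> \<epsilon> / \<epsilon>\<^sup>2) \<longlongrightarrow> c0/real N*(A1*Y1*d1/1 + A2*Y2*d2/1)) (at_right 0)"
      using ev2 by (rule Lim_transform_eventually)
    moreover have "\<forall>\<^sub>F \<epsilon> in at_right 0. \<epsilon>\<^sup>2 \<noteq> (0::real)"
      using ev by eventually_elim auto
    ultimately have "\<phi> \<in> O[at_right 0](\<lambda>\<epsilon>. \<epsilon>\<^sup>2)" by (rule bigoI_tendsto)
    thus ?thesis unfolding \<phi>_def .
  qed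
qed




lemma partII:
  fixes N :: nat and a \<alpha> :: real and P :: "real mat"
    and lam :: "nat \<Rightarrow> real" and v :: "nat \<Rightarrow> real vec" and \<epsilon> :: real
  assumes N: "N \<ge> 2"
    and alpha: "0 < \<alpha>" "\<alpha> \<le> 1"
    and P_carrier: "P \<in> carrier_mat N N"
    and P_nonneg: "\<And>i j. i < N \<Longrightarrow> j < N \<Longrightarrow> P $$ (i, j) \<ge> 0"
    and P_psd: "\<And>x. x \<in> carrier_vec N \<Longrightarrow> 0 \<le> x \<bullet> (P *\<^sub>v x)"
    and v_carrier: "\<And>k. k < N \<Longrightarrow> v k \<in> carrier_vec N"
    and v_eig: "\<And>k. k < N \<Longrightarrow> P *\<^sub>v v k = lam k \<cdot>\<^sub>v v k"
    and v_orth: "\<And>k l. k < N \<Longrightarrow> l < N \<Longrightarrow> v k \<bullet> v l = (if k = l then 1 else 0)"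
    and v0: "v 0 = (1 / sqrt (real N)) \<cdot>\<^sub>v vec N (\<lambda>_. 1)"
    and a_bound: "\<bar>a\<bar> < 1 / \<bar>\<alpha>\<bar>"
    and rho: "spectral_radius (map_mat complex_of_real (a \<cdot>\<^sub>m (P - \<alpha> \<cdot>\<^sub>m one_mat N))) < 1"
    and nonedge_exists: "\<exists>i j. i < j \<and> j < N \<and> \<not> P $$ (i, j) > 0"
    and eps: "\<epsilon> > 0"
  shows "let NE = {(i, j). i < j \<and> j < N \<and> \<not> P $$ (i, j) > 0};
            \<zeta>max = Max ((\<lambda>k. \<bar>lam k - \<alpha>\<bar>) ` {1..<N})
        in Min ((\<lambda>(i, j). \<Sum>k<N. hk N a \<alpha> \<epsilon> (lam k) (v k) i j) ` NE)
           \<ge> Min ((\<lambda>(i, j). - 2 * \<epsilon> * ((1 - \<alpha>\<^sup>2 * a\<^sup>2) * (P $$ (i, i) + P $$ (j, j))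
                   + a\<^sup>2 * \<alpha> * ((P * P) $$ (i, i) + (P * P) $$ (j, j) - 2 * (P * P) $$ (i, j)))
                   / (1 - a\<^sup>2 * \<zeta>max\<^sup>2)\<^sup>2) ` NE)"
proof -
  interpret S: spec N P lam v
    by (unfold_locales, rule P_carrier, rule v_carrier, assumption, rule v_eig, assumption, rule v_orth)
  have N0: "N > 0" using N by simp
  have vnz: "v k \<noteq> 0\<^sub>v N" if k: "k < N" for k
  proof
    assume "v k = 0\<^sub>v N"
    hence "v k \<bullet> v k = 0" by simp
    with v_orth[OF k k] show False by simp
  qed
  have eb: "\<bar>a * (lam k - \<alpha>)\<bar> < 1" if k: "k < N" for k
    by (rule eig_bound[OF P_carrier N0 v_carrier[OF k] vnz[OF k] v_eig[OF k] rho])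
  have lam_nn: "lam k \<ge> 0" if k: "k < N" for k
  proof -
    have "0 \<le> v k \<bullet> (P *\<^sub>v v k)" by (rule P_psd[OF v_carrier[OF k]])
    also have "v k \<bullet> (P *\<^sub>v v k) = lam k * (v k \<bullet> v k)"
      unfolding v_eig[OF k] by (rule scalar_prod_smult_right, insert v_carrier[OF k], auto)
    also have "\<dots> = lam k" using v_orth[OF k k] by simp
    finally show ?thesis .
  qed
  have aa: "\<alpha>\<^sup>2 * a\<^sup>2 < 1"
  proof -
    have "\<bar>a\<bar> * \<alpha> < 1" using a_bound alpha by (simp add: field_simps)
    hence "(\<bar>a\<bar> * \<alpha>)\<^sup>2 < 1" using alpha by (simp add: abs_square_less_1 abs_mult)
    thus ?thesis by (simp add: power_mult_distrib mult.commute)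
  qed
  define \<zeta> where "\<zeta> = Max ((\<lambda>k. \<bar>lam k - \<alpha>\<bar>) ` {1..<N})"
  define E where "E = 1 - a\<^sup>2 * \<zeta>\<^sup>2"
  have fin1: "finite ((\<lambda>k. \<bar>lam k - \<alpha>\<bar>) ` {1..<N})" by simp
  have ne1: "(\<lambda>k. \<bar>lam k - \<alpha>\<bar>) ` {1..<N} \<noteq> {}" using N by auto
  obtain k0 where k0: "k0 \<in> {1..<N}" "\<zeta> = \<bar>lam k0 - \<alpha>\<bar>"
    using Max_in[OF fin1 ne1] unfolding \<zeta>_def by auto
  have Epos: "E > 0"
  proof -
    have "\<bar>a * (lam k0 - \<alpha>)\<bar> < 1" using eb k0(1) by simp
    hence "(a * (lam k0 - \<alpha>))\<^sup>2 < 1" by (simp add: abs_square_less_1)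
    moreover have "a\<^sup>2 * \<zeta>\<^sup>2 = (a * (lam k0 - \<alpha>))\<^sup>2" unfolding k0(2) by (simp add: power_mult_distrib)
    ultimately show ?thesis unfolding E_def by simp
  qed
  have Dge: "1 - a\<^sup>2 * (lam k - \<alpha>)\<^sup>2 \<ge> E" if k: "k \<in> {1..<N}" for k
  proof -
    have "\<bar>lam k - \<alpha>\<bar> \<le> \<zeta>" unfolding \<zeta>_def using fin1 k by simp
    hence "\<bar>lam k - \<alpha>\<bar>\<^sup>2 \<le> \<zeta>\<^sup>2" by (rule power_mono, simp)
    hence "(lam k - \<alpha>)\<^sup>2 \<le> \<zeta>\<^sup>2" by simp
    hence "a\<^sup>2 * (lam k - \<alpha>)\<^sup>2 \<le> a\<^sup>2 * \<zeta>\<^sup>2" by (rule mult_left_mono, simp)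
    thus ?thesis unfolding E_def by simp
  qed
  have w0: "v 0 $ i = v 0 $ j" if "i < N" "j < N" for i j
    using that unfolding v0 by simp
  define F where "F = (\<lambda>l::real. 2 * (1 - \<alpha>\<^sup>2 * a\<^sup>2) * l + 2 * a\<^sup>2 * \<alpha> * l\<^sup>2)"
  have Fnn: "F (lam k) \<ge> 0" if k: "k < N" for k
    unfolding F_def using lam_nn[OF k] aa alpha by (intro add_nonneg_nonneg mult_nonneg_nonneg) auto
  define NE where "NE = {(i, j). i < j \<and> j < N \<and> \<not> P $$ (i, j) > 0}"
  have finNE: "finite NE"
    by (rule finite_subset[of _ "{..<N} \<times> {..<N}"], auto simp: NE_def)
  have neNE: "NE \<noteq> {}" using nonedge_exists unfolding NE_def by auto
  have pointwise: "(- 2 * \<epsilon> * ((1 - \<alpha>\<^sup>2 * a\<^sup>2) * (P $$ (i, i) + P $$ (j, j))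
                   + a\<^sup>2 * \<alpha> * ((P * P) $$ (i, i) + (P * P) $$ (j, j) - 2 * (P * P) $$ (i, j)))
                   / (1 - a\<^sup>2 * \<zeta>\<^sup>2)\<^sup>2) \<le> (\<Sum>k<N. hk N a \<alpha> \<epsilon> (lam k) (v k) i j)"
    if ijNE: "(i,j) \<in> NE" for i j
  proof -
    have ij: "i < N" "j < N" "i \<noteq> j" and Pij0: "\<not> P $$ (i,j) > 0" using ijNE unfolding NE_def by auto
    have Pij: "P $$ (i,j) = 0" using P_nonneg[OF ij(1) ij(2)] Pij0 by simp
    define w where "w = (\<lambda>k. v k $ i - v k $ j)"
    have hk_eq: "hk N a \<alpha> \<epsilon> (lam k) (v k) i j = - (\<epsilon> * (w k)\<^sup>2 * F (lam k)) / (1 - a\<^sup>2 * (lam k - \<alpha>)\<^sup>2)\<^sup>2"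
      if k: "k < N" for k
      unfolding hk_def zk_def zk_val[OF v_carrier[OF k] ij] F_def w_def by simp
    have lower: "- (\<epsilon> * (w k)\<^sup>2 * F (lam k)) / E\<^sup>2 \<le> hk N a \<alpha> \<epsilon> (lam k) (v k) i j" if k: "k < N" for k
    proof (cases "k = 0")
      case True
      hence "w k = 0" unfolding w_def using w0[OF ij(1) ij(2)] by simp
      thus ?thesis unfolding hk_eq[OF k] by simp
    next
      case False
      hence k1: "k \<in> {1..<N}" using k by auto
      have X: "\<epsilon> * (w k)\<^sup>2 * F (lam k) \<ge> 0" using eps Fnn[OF k] by simp
      have "E\<^sup>2 \<le> (1 - a\<^sup>2 * (lam k - \<alpha>)\<^sup>2)\<^sup>2" using Dge[OF k1] Epos by (intro power_mono) auto
      hence "(\<epsilon> * (w k)\<^sup>2 * F (lam k)) / (1 - a\<^sup>2 * (lam k - \<alpha>)\<^sup>2)\<^sup>2 \<le> (\<epsilon> * (w k)\<^sup>2 * F (lam k)) / E\<^sup>2"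
      proof (rule divide_left_mono[OF _ X])
        have "1 - a\<^sup>2 * (lam k - \<alpha>)\<^sup>2 > 0" using Dge[OF k1] Epos by linarith
        thus "0 < (1 - a\<^sup>2 * (lam k - \<alpha>)\<^sup>2)\<^sup>2 * E\<^sup>2" using Epos by simp
      qed
      thus ?thesis unfolding hk_eq[OF k] by simp
    qed
    have s1: "(\<Sum>k<N. (w k)\<^sup>2 * lam k) = P $$ (i,i) + P $$ (j,j) - 2 * P $$ (i,j)"
    proof -
      have "(\<Sum>k<N. (w k)\<^sup>2 * lam k) = (\<Sum>k<N. lam k * v k $ i * v k $ i + lam k * v k $ j * v k $ j - 2 * (lam k * v k $ i * v k $ j))"
        unfolding w_def by (rule sum.cong[OF refl], simp add: power2_eq_square algebra_simps)
      also have "\<dots> = (\<Sum>k<N. lam k * v k $ i * v k $ i) + (\<Sum>k<N. lam k * v k $ j * v k $ j) - 2 * (\<Sum>k<N. lam k * v k $ i * v k $ j)"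
        by (simp add: sum.distrib sum_subtractf sum_distrib_left)
      finally show ?thesis using S.Pspec ij by simp
    qed
    have s2: "(\<Sum>k<N. (w k)\<^sup>2 * (lam k)\<^sup>2) = (P*P) $$ (i,i) + (P*P) $$ (j,j) - 2 * (P*P) $$ (i,j)"
    proof -
      have "(\<Sum>k<N. (w k)\<^sup>2 * (lam k)\<^sup>2) = (\<Sum>k<N. (lam k)\<^sup>2 * v k $ i * v k $ i + (lam k)\<^sup>2 * v k $ j * v k $ j - 2 * ((lam k)\<^sup>2 * v k $ i * v k $ j))"
        unfolding w_def by (rule sum.cong[OF refl], simp add: power2_eq_square algebra_simps)
      also have "\<dots> = (\<Sum>k<N. (lam k)\<^sup>2 * v k $ i * v k $ i) + (\<Sum>k<N. (lam k)\<^sup>2 * v k $ j * v k $ j) - 2 * (\<Sum>k<N. (lam k)\<^sup>2 * v k $ i * v k $ j)"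
        by (simp add: sum.distrib sum_subtractf sum_distrib_left)
      finally show ?thesis using S.P2spec ij by simp
    qed
    have "(\<Sum>k<N. - (\<epsilon> * (w k)\<^sup>2 * F (lam k)) / E\<^sup>2) = - \<epsilon> / E\<^sup>2 * (2 * (1 - \<alpha>\<^sup>2 * a\<^sup>2) * (\<Sum>k<N. (w k)\<^sup>2 * lam k)
        + 2 * a\<^sup>2 * \<alpha> * (\<Sum>k<N. (w k)\<^sup>2 * (lam k)\<^sup>2))"
    proof -
      have "(\<Sum>k<N. - (\<epsilon> * (w k)\<^sup>2 * F (lam k)) / E\<^sup>2) = (\<Sum>k<N. (- \<epsilon> / E\<^sup>2) *
          ((2 * (1 - \<alpha>\<^sup>2 * a\<^sup>2)) * ((w k)\<^sup>2 * lam k) + (2 * a\<^sup>2 * \<alpha>) * ((w k)\<^sup>2 * (lam k)\<^sup>2)))"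
        by (rule sum.cong[OF refl], insert Epos, simp add: F_def field_simps)
      also have "\<dots> = (- \<epsilon> / E\<^sup>2) * ((2 * (1 - \<alpha>\<^sup>2 * a\<^sup>2)) * (\<Sum>k<N. (w k)\<^sup>2 * lam k)
          + (2 * a\<^sup>2 * \<alpha>) * (\<Sum>k<N. (w k)\<^sup>2 * (lam k)\<^sup>2))"
        by (simp only: sum_distrib_left[symmetric] sum.distrib)
      finally show ?thesis by simp
    qed
    also have "\<dots> = (- 2 * \<epsilon> * ((1 - \<alpha>\<^sup>2 * a\<^sup>2) * (P $$ (i, i) + P $$ (j, j))
                   + a\<^sup>2 * \<alpha> * ((P * P) $$ (i, i) + (P * P) $$ (j, j) - 2 * (P * P) $$ (i, j)))
                   / (1 - a\<^sup>2 * \<zeta>\<^sup>2)\<^sup>2)"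
    proof -
      have g: "\<And>D X Q Y1 Y2 R::real. (- \<epsilon> / D) * ((2 * X) * Q + (2 * Y1 * Y2) * R) = - 2 * \<epsilon> * (X * Q + Y1 * Y2 * R) / D"
        subgoal for D X Q Y1 Y2 R by (cases "D = 0") (simp_all add: field_simps)
        done
      show ?thesis unfolding s1 s2 Pij E_def using g by simp
    qed
    finally have eq: "(\<Sum>k<N. - (\<epsilon> * (w k)\<^sup>2 * F (lam k)) / E\<^sup>2) = (- 2 * \<epsilon> * ((1 - \<alpha>\<^sup>2 * a\<^sup>2) * (P $$ (i, i) + P $$ (j, j))
                   + a\<^sup>2 * \<alpha> * ((P * P) $$ (i, i) + (P * P) $$ (j, j) - 2 * (P * P) $$ (i, j)))
                   / (1 - a\<^sup>2 * \<zeta>\<^sup>2)\<^sup>2)" .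
    have "(\<Sum>k<N. - (\<epsilon> * (w k)\<^sup>2 * F (lam k)) / E\<^sup>2) \<le> (\<Sum>k<N. hk N a \<alpha> \<epsilon> (lam k) (v k) i j)"
      by (rule sum_mono, rule lower, simp)
    thus ?thesis unfolding eq .
  qed
  show ?thesis unfolding Let_def NE_def[symmetric] \<zeta>_def[symmetric]
    by (rule Min_mono_pointwise[OF finNE neNE], insert pointwise, auto)
qed


theorem proposition3:
  fixes N :: nat and a \<alpha> sr sw :: real and P :: "real mat"
    and lam :: "nat \<Rightarrow> real" and v :: "nat \<Rightarrow> real vec"
  assumes N: "N \<ge> 2"
    and alpha: "0 < \<alpha>" "\<alpha> \<le> 1"
    and P_carrier: "P \<in> carrier_mat N N"
    and P_sym: "P\<^sup>T = P"
    and P_nonneg: "\<And>i j. i < N \<Longrightarrow> j < N \<Longrightarrow> P $$ (i, j) \<ge> 0"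
    and P_rows: "\<And>i. i < N \<Longrightarrow> (\<Sum>j<N. P $$ (i, j)) = 1"
    and P_cols: "\<And>j. j < N \<Longrightarrow> (\<Sum>i<N. P $$ (i, j)) = 1"
    and P_psd: "\<And>x. x \<in> carrier_vec N \<Longrightarrow> 0 \<le> x \<bullet> (P *\<^sub>v x)"
    and v_carrier: "\<And>k. k < N \<Longrightarrow> v k \<in> carrier_vec N"
    and v_eig: "\<And>k. k < N \<Longrightarrow> P *\<^sub>v v k = lam k \<cdot>\<^sub>v v k"
    and v_orth: "\<And>k l. k < N \<Longrightarrow> l < N \<Longrightarrow> v k \<bullet> v l = (if k = l then 1 else 0)"
    and v0: "v 0 = (1 / sqrt (real N)) \<cdot>\<^sub>v vec N (\<lambda>_. 1)"
    and lam0: "lam 0 = 1"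
    and lam1: "lam 1 < 1"
    and lam_sorted: "\<And>k. 1 \<le> k \<Longrightarrow> k + 1 < N \<Longrightarrow> lam (k + 1) \<le> lam k"
    and lamN: "-1 < lam (N - 1)"
    and a_bound: "\<bar>a\<bar> < 1 / \<bar>\<alpha>\<bar>"
    and rho: "spectral_radius (map_mat complex_of_real (a \<cdot>\<^sub>m (P - \<alpha> \<cdot>\<^sub>m one_mat N))) < 1"
    and nonedge_exists: "\<exists>i j. i < j \<and> j < N \<and> \<not> P $$ (i, j) > 0"
  shows
    "(\<forall>i j. i < j \<and> j < N \<and> \<not> P $$ (i, j) > 0 \<longrightarrow>
        (\<lambda>\<epsilon>. msd_tilde N a sr sw (P + \<epsilon> \<cdot>\<^sub>m deltaP N i j) \<alpha> - msd_tilde N a sr sw P \<alpha>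
              - a\<^sup>2 * \<alpha>\<^sup>2 * sw\<^sup>2 / real N * (\<Sum>k<N. hk N a \<alpha> \<epsilon> (lam k) (v k) i j))
        \<in> O[at_right 0](\<lambda>\<epsilon>. \<epsilon>\<^sup>2))
     \<and>
     (\<forall>\<epsilon>>0.
        let NE = {(i, j). i < j \<and> j < N \<and> \<not> P $$ (i, j) > 0};
            \<zeta>max = Max ((\<lambda>k. \<bar>lam k - \<alpha>\<bar>) ` {1..<N})
        in Min ((\<lambda>(i, j). \<Sum>k<N. hk N a \<alpha> \<epsilon> (lam k) (v k) i j) ` NE)
           \<ge> Min ((\<lambda>(i, j). - 2 * \<epsilon> * ((1 - \<alpha>\<^sup>2 * a\<^sup>2) * (P $$ (i, i) + P $$ (j, j))
                   + a\<^sup>2 * \<alpha> * ((P * P) $$ (i, i) + (P * P) $$ (j, j) - 2 * (P * P) $$ (i, j)))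
                   / (1 - a\<^sup>2 * \<zeta>max\<^sup>2)\<^sup>2) ` NE))"
proof -
  have i: "\<forall>i j. i < j \<and> j < N \<and> \<not> P $$ (i, j) > 0 \<longrightarrow>
        (\<lambda>\<epsilon>. msd_tilde N a sr sw (P + \<epsilon> \<cdot>\<^sub>m deltaP N i j) \<alpha> - msd_tilde N a sr sw P \<alpha>
              - a\<^sup>2 * \<alpha>\<^sup>2 * sw\<^sup>2 / real N * (\<Sum>k<N. hk N a \<alpha> \<epsilon> (lam k) (v k) i j))
        \<in> O[at_right 0](\<lambda>\<epsilon>. \<epsilon>\<^sup>2)"
  proof (intro allI impI)
    fix i j assume h: "i < j \<and> j < N \<and> \<not> P $$ (i, j) > 0"
    hence ij: "i < N" "j < N" "i \<noteq> j" by auto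
    show "(\<lambda>\<epsilon>. msd_tilde N a sr sw (P + \<epsilon> \<cdot>\<^sub>m deltaP N i j) \<alpha> - msd_tilde N a sr sw P \<alpha>
              - a\<^sup>2 * \<alpha>\<^sup>2 * sw\<^sup>2 / real N * (\<Sum>k<N. hk N a \<alpha> \<epsilon> (lam k) (v k) i j))
        \<in> O[at_right 0](\<lambda>\<epsilon>. \<epsilon>\<^sup>2)"
      by (rule partI[OF N P_carrier P_sym v_carrier v_eig v_orth rho ij])
  qed
  have ii: "\<forall>\<epsilon>>0.
        let NE = {(i, j). i < j \<and> j < N \<and> \<not> P $$ (i, j) > 0};
            \<zeta>max = Max ((\<lambda>k. \<bar>lam k - \<alpha>\<bar>) ` {1..<N})
        in Min ((\<lambda>(i, j). \<Sum>k<N. hk N a \<alpha> \<epsilon> (lam k) (v k) i j) ` NE)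
           \<ge> Min ((\<lambda>(i, j). - 2 * \<epsilon> * ((1 - \<alpha>\<^sup>2 * a\<^sup>2) * (P $$ (i, i) + P $$ (j, j))
                   + a\<^sup>2 * \<alpha> * ((P * P) $$ (i, i) + (P * P) $$ (j, j) - 2 * (P * P) $$ (i, j)))
                   / (1 - a\<^sup>2 * \<zeta>max\<^sup>2)\<^sup>2) ` NE)"
  proof (intro allI impI)
    fix \<epsilon> :: real assume eps: "\<epsilon> > 0"
    show "let NE = {(i, j). i < j \<and> j < N \<and> \<not> P $$ (i, j) > 0};
            \<zeta>max = Max ((\<lambda>k. \<bar>lam k - \<alpha>\<bar>) ` {1..<N})
        in Min ((\<lambda>(i, j). \<Sum>k<N. hk N a \<alpha> \<epsilon> (lam k) (v k) i j) ` NE)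
           \<ge> Min ((\<lambda>(i, j). - 2 * \<epsilon> * ((1 - \<alpha>\<^sup>2 * a\<^sup>2) * (P $$ (i, i) + P $$ (j, j))
                   + a\<^sup>2 * \<alpha> * ((P * P) $$ (i, i) + (P * P) $$ (j, j) - 2 * (P * P) $$ (i, j)))
                   / (1 - a\<^sup>2 * \<zeta>max\<^sup>2)\<^sup>2) ` NE)"
      by (rule partII[OF N alpha P_carrier P_nonneg P_psd v_carrier v_eig v_orth v0 a_bound rho nonedge_exists eps])
  qed
  show ?thesis using i ii by blast
qed

end
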